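(* Fix weights $w_1,\dots,w_D>0$ and let $\mu_{n,N,w}$ be the Boltzmann probability measure on perfect matchings $\tau$ of the $N$-fold blow-up $\mathbb T(n,\Lambda)_N$, with $\mu_{n,N,w}(\tau)\propto\prod_{e\in\tau}w(e)$, where every lift of an edge of type $e_i$ has weight $w_i$. Let $H(\mu_{n,N,w})=-\sum_\tau\mu_{n,N,w}(\tau)\log\mu_{n,N,w}(\tau)$ be its Shannon entropy. Then $$\lim_{n\to\infty}\lim_{N\to\infty}\frac{1}{Nn^d}\Big[H(\mu_{n,N,w})-n^d\log N!\Big]=\log(w_1+\dots+w_D)-\frac{1}{w_1+\dots+w_D}\sum_{i=1}^D w_i\log w_i .$$
   Context: $\Lambda$ is a bipartite graph embedded in $\mathbb R^d$ of the following form (or a linear image of one): there are vectors $e_1,\dots,e_D\in\mathbb R^d$ spanning $\mathbb R^d$ with $\sum_{i=1}^D e_i=0$ and a vector $v_0$ with $e_i\in v_0+\mathbb Z^d$ for all $i$; the white vertices are $W=\mathbb Z^d$, the black vertices are $B=\mathbb Z^d+v_0$, and each white vertex $w$ is joined by an edge exactly to the black vertices $w+e_1,\dots,w+e_D$; $\Lambda$ is connected. An edge from $w$ to $w+e_i$ is said to be of type $e_i$. The torus $\mathbb T(n,\Lambda)=\Lambda/n\mathbb Z^d$ has $n^d$ white and $n^d$ black vertices. The $N$-fold blow-up $G_N$ of a graph $G$ replaces every vertex by $N$ copies (lifts) and every edge $(u,v)$ by the complete bipartite graph between the lifts of $u$ and the lifts of $v$. *)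

theory Defs
  imports "HOL-Analysis.Analysis"
begin

definition int_point :: "real^'d \<Rightarrow> bool" where
  "int_point x \<longleftrightarrow> (\<forall>j. x $ j \<in> \<int>)"

text \<open>Vertices of Lambda are tagged points: (False, x) is the white vertex x \<in> Z^d,
  (True, y) is the black vertex y \<in> Z^d + v0.\<close>
definition Lambda_vertex :: "real^'d \<Rightarrow> bool \<times> (real^'d) \<Rightarrow> bool" where
  "Lambda_vertex v0 u \<longleftrightarrow>
     (if fst u then int_point (snd u - v0) else int_point (snd u))"

definition Lambda_adj :: "nat \<Rightarrow> (nat \<Rightarrow> real^'d) \<Rightarrow> bool \<times> (real^'d) \<Rightarrow> bool \<times> (real^'d) \<Rightarrow> bool" where
  "Lambda_adj D e u v \<longleftrightarrow>
     (\<exists>w i. i < D \<and> int_point w \<and>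
        ((u = (False, w) \<and> v = (True, w + e i)) \<or> (v = (False, w) \<and> u = (True, w + e i))))"

definition Lambda_connected :: "nat \<Rightarrow> (nat \<Rightarrow> real^'d) \<Rightarrow> real^'d \<Rightarrow> bool" where
  "Lambda_connected D e v0 \<longleftrightarrow>
     (\<forall>u v. Lambda_vertex v0 u \<longrightarrow> Lambda_vertex v0 v \<longrightarrow> (Lambda_adj D e)\<^sup>*\<^sup>* u v)"

text \<open>Integer offset k_i with e_i = v0 + k_i (black vertex w + e_i has index w + k_i).\<close>
definition offset :: "(nat \<Rightarrow> real^'d) \<Rightarrow> real^'d \<Rightarrow> nat \<Rightarrow> int^'d" where
  "offset e v0 i = (\<chi> j. \<lfloor>(e i - v0) $ j\<rfloor>)"

text \<open>Representatives of Z^d / nZ^d (indices of white, resp. black, vertices).\<close>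
definition torus_pts :: "nat \<Rightarrow> (int^'d) set" where
  "torus_pts n = {x. \<forall>j. 0 \<le> x $ j \<and> x $ j < int n}"

definition tmod :: "nat \<Rightarrow> int^'d \<Rightarrow> int^'d" where
  "tmod n x = (\<chi> j. x $ j mod int n)"

text \<open>Edges of the blow-up: ((x,a), i, b) joins white lift (x,a) to black lift
  (x + k_i mod n, b) and has type i.\<close>
definition blowup_edges :: "nat \<Rightarrow> nat \<Rightarrow> nat \<Rightarrow> (((int^'d) \<times> nat) \<times> nat \<times> nat) set" where
  "blowup_edges D n N = {((x,a),i,b). x \<in> torus_pts n \<and> a < N \<and> i < D \<and> b < N}"

definition edge_black :: "(nat \<Rightarrow> real^'d) \<Rightarrow> real^'d \<Rightarrow> nat \<Rightarrow> ((int^'d) \<times> nat) \<times> nat \<times> nat \<Rightarrow> (int^'d) \<times> nat" where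
  "edge_black e v0 n t = (case t of ((x,a),i,b) \<Rightarrow> (tmod n (x + offset e v0 i), b))"

definition edge_white :: "((int^'d) \<times> nat) \<times> nat \<times> nat \<Rightarrow> (int^'d) \<times> nat" where
  "edge_white t = fst t"

definition edge_type :: "((int^'d) \<times> nat) \<times> nat \<times> nat \<Rightarrow> nat" where
  "edge_type t = fst (snd t)"

definition perfect_matchings ::
  "nat \<Rightarrow> (nat \<Rightarrow> real^'d) \<Rightarrow> real^'d \<Rightarrow> nat \<Rightarrow> nat \<Rightarrow> (((int^'d) \<times> nat) \<times> nat \<times> nat) set set" where
  "perfect_matchings D e v0 n N =
     {\<tau>. \<tau> \<subseteq> blowup_edges D n N \<and>
          (\<forall>u \<in> torus_pts n \<times> {..<N}. \<exists>!t. t \<in> \<tau> \<and> edge_white t = u) \<and>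
          (\<forall>v \<in> torus_pts n \<times> {..<N}. \<exists>!t. t \<in> \<tau> \<and> edge_black e v0 n t = v)}"

definition match_weight :: "(nat \<Rightarrow> real) \<Rightarrow> (((int^'d) \<times> nat) \<times> nat \<times> nat) set \<Rightarrow> real" where
  "match_weight w \<tau> = (\<Prod>t\<in>\<tau>. w (edge_type t))"

definition partition_fn :: "nat \<Rightarrow> (nat \<Rightarrow> real^'d) \<Rightarrow> real^'d \<Rightarrow> (nat \<Rightarrow> real) \<Rightarrow> nat \<Rightarrow> nat \<Rightarrow> real" where
  "partition_fn D e v0 w n N = (\<Sum>\<tau>\<in>perfect_matchings D e v0 n N. match_weight w \<tau>)"

definition boltzmann :: "nat \<Rightarrow> (nat \<Rightarrow> real^'d) \<Rightarrow> real^'d \<Rightarrow> (nat \<Rightarrow> real) \<Rightarrow> nat \<Rightarrow> nat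
    \<Rightarrow> (((int^'d) \<times> nat) \<times> nat \<times> nat) set \<Rightarrow> real" where
  "boltzmann D e v0 w n N \<tau> = match_weight w \<tau> / partition_fn D e v0 w n N"

definition boltzmann_entropy :: "nat \<Rightarrow> (nat \<Rightarrow> real^'d) \<Rightarrow> real^'d \<Rightarrow> (nat \<Rightarrow> real) \<Rightarrow> nat \<Rightarrow> nat \<Rightarrow> real" where
  "boltzmann_entropy D e v0 w n N =
     - (\<Sum>\<tau>\<in>perfect_matchings D e v0 n N.
          boltzmann D e v0 w n N \<tau> * ln (boltzmann D e v0 w n N \<tau>))"

end

theory Submission
  imports Defs "HOL-Library.FuncSet" "HOL-Real_Asymp.Real_Asymp"
begin

lemma torus_eq: "torus_pts n = vec_lambda ` (PiE UNIV (\<lambda>_. {0..<int n}))"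
proof -
  have "x \<in> vec_lambda ` (PiE UNIV (\<lambda>_. {0..<int n}))" if "x \<in> torus_pts n" for x :: "int^'d"
    using that unfolding torus_pts_def
    by (intro image_eqI[of _ _ "vec_nth x"]) auto
  then show ?thesis unfolding torus_pts_def by auto
qed

lemma card_torus: "card (torus_pts n :: (int^'d) set) = n ^ CARD('d)"
proof -
  have "card (torus_pts n :: (int^'d) set) = card (PiE (UNIV::'d set) (\<lambda>_. {0..<int n}))"
    unfolding torus_eq by (rule card_image) (auto intro: inj_onI simp: vec_lambda_inject)
  also have "\<dots> = n ^ CARD('d)" by (simp add: card_PiE)
  finally show ?thesis .
qed

lemma finite_torus: "finite (torus_pts n)"
  unfolding torus_eq by (intro finite_imageI finite_PiE) auto

lemma tmod_in: "n \<ge> 1 \<Longrightarrow> tmod n z \<in> torus_pts n"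
  unfolding tmod_def torus_pts_def by auto

lemma tmod_id: "x \<in> torus_pts n \<Longrightarrow> tmod n x = x"
  unfolding tmod_def torus_pts_def by (auto simp: vec_eq_iff)

lemma tmod_shift_iff:
  assumes "n \<ge> 1" "x \<in> torus_pts n"
  shows "tmod n (x + k) = y \<longleftrightarrow> x = tmod n (y - k) \<and> y \<in> torus_pts n"
proof
  assume h: "tmod n (x + k) = y"
  then have "y \<in> torus_pts n" using tmod_in assms by blast
  moreover have "x = tmod n (y - k)"
  proof -
    have "x $ j = (y $ j - k $ j) mod int n" for j
    proof -
      have "y $ j = (x $ j + k $ j) mod int n" using h unfolding tmod_def by auto
      then have "(y $ j - k $ j) mod int n = (x $ j + k $ j - k $ j) mod int n"
        by (simp add: mod_diff_left_eq)
      also have "\<dots> = x $ j" using assms(2) unfolding torus_pts_def by auto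
      finally show ?thesis by simp
    qed
    then show ?thesis unfolding tmod_def by (auto simp: vec_eq_iff)
  qed
  ultimately show "x = tmod n (y - k) \<and> y \<in> torus_pts n" by simp
next
  assume h: "x = tmod n (y - k) \<and> y \<in> torus_pts n"
  have "(x $ j + k $ j) mod int n = y $ j" for j
  proof -
    have "x $ j = (y $ j - k $ j) mod int n" using h unfolding tmod_def by auto
    then have "(x $ j + k $ j) mod int n = (y $ j - k $ j + k $ j) mod int n"
      by (simp add: mod_add_left_eq)
    also have "\<dots> = y $ j" using h unfolding torus_pts_def by auto
    finally show ?thesis .
  qed
  then show "tmod n (x + k) = y" unfolding tmod_def by (auto simp: vec_eq_iff)
qed

definition "sb e v0 n x i = tmod n (x + offset e v0 i)"
definition "IT D n (N::nat) = PiE (torus_pts n) (\<lambda>_. PiE {..<N} (\<lambda>_. {..<D::nat}))"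
definition "BT n N = PiE (torus_pts n) (\<lambda>_. PiE {..<N} (\<lambda>_. {..<N::nat}))"
definition "Sy e v0 n N \<iota> y = {(x,a) \<in> torus_pts n \<times> {..<N}. sb e v0 n x (\<iota> x a) = y}"
definition "fib e v0 n N \<iota> = {\<beta> \<in> BT n N. \<forall>y\<in>torus_pts n.
   bij_betw (\<lambda>(x,a). \<beta> x a) (Sy e v0 n N \<iota> y) {..<N}}"
definition "toM n N \<iota> \<beta> = (\<lambda>(x,a). ((x,a), \<iota> x a, \<beta> x a :: nat)) ` (torus_pts n \<times> {..<N})"
definition "Good D e v0 n N = Sigma (IT D n N) (fib e v0 n N)"

lemma toM_mem: "t \<in> toM n N \<iota> \<beta> \<longleftrightarrow> (\<exists>x a. x \<in> torus_pts n \<and> a < N \<and> t = ((x,a), \<iota> x a, \<beta> x a))"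
proof
  assume "t \<in> toM n N \<iota> \<beta>"
  then obtain u where "u \<in> torus_pts n \<times> {..<N}" "t = (\<lambda>(x,a). ((x,a), \<iota> x a, \<beta> x a)) u"
    unfolding toM_def by (meson imageE)
  then show "\<exists>x a. x \<in> torus_pts n \<and> a < N \<and> t = ((x,a), \<iota> x a, \<beta> x a)" by (cases u) auto
next
  assume "\<exists>x a. x \<in> torus_pts n \<and> a < N \<and> t = ((x,a), \<iota> x a, \<beta> x a)"
  then obtain x a where "x \<in> torus_pts n" "a < N" "t = ((x,a), \<iota> x a, \<beta> x a)" by blast
  then show "t \<in> toM n N \<iota> \<beta>" unfolding toM_def by (intro image_eqI[of _ _ "(x,a)"]) auto
qed

lemma test1:
  assumes "toM n N \<iota> \<beta> = toM n N \<iota>' \<beta>'" "x \<in> torus_pts n" "a < N"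
  shows "\<iota> x a = \<iota>' x a \<and> \<beta> x a = \<beta>' x a"
proof -
    have "((x,a), \<iota> x a, \<beta> x a) \<in> toM n N \<iota> \<beta>"
      using assms(2,3) unfolding toM_def by (intro image_eqI[of _ _ "(x,a)"]) auto
    then have "((x,a), \<iota> x a, \<beta> x a) \<in> toM n N \<iota>' \<beta>'" using assms(1) by simp
    then obtain u where "u \<in> torus_pts n \<times> {..<N}" "((x,a), \<iota> x a, \<beta> x a) = (\<lambda>(x,a). ((x,a), \<iota>' x a, \<beta>' x a)) u"
      unfolding toM_def by (meson imageE)
    then show ?thesis by (cases u) simp
qed

lemma toM_inj:
  assumes "(\<iota>,\<beta>) \<in> Good D e v0 n N" "(\<iota>',\<beta>') \<in> Good D e v0 n N"
    and "toM n N \<iota> \<beta> = toM n N \<iota>' \<beta>'"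
  shows "\<iota> = \<iota>' \<and> \<beta> = \<beta>'"
proof -
  have eq: "\<iota> x a = \<iota>' x a \<and> \<beta> x a = \<beta>' x a" if "x \<in> torus_pts n" "a < N" for x a
    using test1[OF assms(3) that] .
  have i1: "\<iota> \<in> IT D n N" "\<iota>' \<in> IT D n N" "\<beta> \<in> BT n N" "\<beta>' \<in> BT n N"
    using assms(1,2) unfolding Good_def fib_def by auto
  have "\<iota> x = \<iota>' x" for x
  proof (cases "x \<in> torus_pts n")
    case True
    show ?thesis
      by (rule PiE_ext[of _ "{..<N}" "\<lambda>_. {..<D}"]) (use i1 True eq in \<open>auto simp: IT_def\<close>)
  next
    case False
    then show ?thesis using i1 unfolding IT_def by (simp add: PiE_def extensional_def)
  qed
  moreover have "\<beta> x = \<beta>' x" for x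
  proof (cases "x \<in> torus_pts n")
    case True
    show ?thesis
      by (rule PiE_ext[of _ "{..<N}" "\<lambda>_. {..<N}"]) (use i1 True eq in \<open>auto simp: BT_def\<close>)
  next
    case False
    then show ?thesis using i1 unfolding BT_def by (simp add: PiE_def extensional_def)
  qed
  ultimately show ?thesis by (auto simp: fun_eq_iff)
qed

lemma toM_in:
  assumes n: "n \<ge> 1" and g: "(\<iota>,\<beta>) \<in> Good D e v0 n N"
  shows "toM n N \<iota> \<beta> \<in> perfect_matchings D e v0 n N"
proof -
  have \<iota>: "\<iota> \<in> IT D n N" and \<beta>: "\<beta> \<in> fib e v0 n N \<iota>" using g unfolding Good_def by auto
  let ?\<tau> = "toM n N \<iota> \<beta>"
  have \<beta>BT: "\<beta> \<in> BT n N" using \<beta> unfolding fib_def by blast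
  have sub: "?\<tau> \<subseteq> blowup_edges D n N"
    using \<iota> \<beta>BT unfolding blowup_edges_def IT_def BT_def by (auto simp: PiE_iff toM_mem)
  have wh: "\<exists>!t. t \<in> ?\<tau> \<and> edge_white t = u" if "u \<in> torus_pts n \<times> {..<N}" for u
  proof -
    obtain x a where u: "u = (x,a)" by force
    show ?thesis
      apply (rule ex1I[of _ "((x,a), \<iota> x a, \<beta> x a)"])
      using that u unfolding toM_mem edge_white_def by auto
  qed
  have bl: "\<exists>!t. t \<in> ?\<tau> \<and> edge_black e v0 n t = v" if "v \<in> torus_pts n \<times> {..<N}" for v
  proof -
    obtain y b where v: "v = (y,b)" by force
    have y: "y \<in> torus_pts n" and b: "b < N" using that v by auto
    have bij: "bij_betw (\<lambda>(x,a). \<beta> x a) (Sy e v0 n N \<iota> y) {..<N}"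
      using \<beta> y unfolding fib_def by auto
    obtain u where u: "u \<in> Sy e v0 n N \<iota> y" "(\<lambda>(x,a). \<beta> x a) u = b"
    proof -
      have "b \<in> (\<lambda>(x,a). \<beta> x a) ` Sy e v0 n N \<iota> y" using b bij unfolding bij_betw_def by simp
      then show ?thesis using that by blast
    qed
    obtain x a where xa: "u = (x,a)" by force
    have xa2: "x \<in> torus_pts n" "a < N" "sb e v0 n x (\<iota> x a) = y" "\<beta> x a = b"
      using u xa unfolding Sy_def by auto
    show ?thesis
    proof (rule ex1I[of _ "((x,a), \<iota> x a, \<beta> x a)"])
      show "((x,a), \<iota> x a, \<beta> x a) \<in> ?\<tau> \<and> edge_black e v0 n ((x,a), \<iota> x a, \<beta> x a) = v"
        using xa2 v unfolding toM_mem edge_black_def sb_def by auto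
    next
      fix t assume t: "t \<in> ?\<tau> \<and> edge_black e v0 n t = v"
      then obtain x' a' where t': "t = ((x',a'), \<iota> x' a', \<beta> x' a')" "x' \<in> torus_pts n" "a' < N"
        unfolding toM_mem by auto
      have "sb e v0 n x' (\<iota> x' a') = y" "\<beta> x' a' = b"
        using t t' v unfolding edge_black_def sb_def by auto
      then have "(x',a') \<in> Sy e v0 n N \<iota> y" using t' unfolding Sy_def by auto
      moreover have "(\<lambda>(x,a). \<beta> x a) (x',a') = (\<lambda>(x,a). \<beta> x a) (x,a)" using xa2 \<open>\<beta> x' a' = b\<close> by simp
      ultimately have "(x',a') = (x,a)"
        using u(1) xa by (intro inj_onD[OF bij_betw_imp_inj_on[OF bij]]) auto
      then show "t = ((x,a), \<iota> x a, \<beta> x a)" using t' by simp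
    qed
  qed
  show ?thesis unfolding perfect_matchings_def mem_Collect_eq
    by (intro conjI ballI sub) (erule wh, erule bl)
qed

lemma toM_onto:
  fixes e :: "nat \<Rightarrow> real^'d"
  assumes n: "n \<ge> 1" and P: "\<tau> \<in> perfect_matchings D e v0 n N"
  shows "\<tau> \<in> (\<lambda>(\<iota>,\<beta>). toM n N \<iota> \<beta>) ` Good D e v0 n N"
proof -
  let ?V = "torus_pts n \<times> {..<N}"
  have sub: "\<tau> \<subseteq> blowup_edges D n N"
    and wh: "\<And>u. u \<in> ?V \<Longrightarrow> \<exists>!t. t \<in> \<tau> \<and> edge_white t = u"
    and bl: "\<And>v. v \<in> ?V \<Longrightarrow> \<exists>!t. t \<in> \<tau> \<and> edge_black e v0 n t = v"
  proof -
    have P': "\<tau> \<subseteq> blowup_edges D n N \<and> (\<forall>u\<in>?V. \<exists>!t. t \<in> \<tau> \<and> edge_white t = u) \<and>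
       (\<forall>v\<in>?V. \<exists>!t. t \<in> \<tau> \<and> edge_black e v0 n t = v)"
      using P unfolding perfect_matchings_def mem_Collect_eq .
    show "\<tau> \<subseteq> blowup_edges D n N" using P' by (rule conjunct1)
    show "\<And>u. u \<in> ?V \<Longrightarrow> \<exists>!t. t \<in> \<tau> \<and> edge_white t = u" using P' by (simp only: Ball_def)
    show "\<And>v. v \<in> ?V \<Longrightarrow> \<exists>!t. t \<in> \<tau> \<and> edge_black e v0 n t = v" using P' by (simp only: Ball_def)
  qed
  have blu: "t = t'" if "t \<in> \<tau>" "t' \<in> \<tau>" "edge_black e v0 n t = edge_black e v0 n t'"
    "edge_black e v0 n t \<in> ?V" for t t'
    using bl[OF that(4)] that(1-3) by metis
  have blex: "\<exists>t. t \<in> \<tau> \<and> edge_black e v0 n t = v" if "v \<in> ?V" for v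
    using bl[OF that] by metis
  define T where "T u = (THE t. t \<in> \<tau> \<and> edge_white t = u)" for u
  have T: "T u \<in> \<tau> \<and> edge_white (T u) = u" if "u \<in> ?V" for u
    using theI'[OF wh[OF that]] unfolding T_def by blast
  have Tuniq: "t = T u" if "u \<in> ?V" "t \<in> \<tau>" "edge_white t = u" for u t
    using wh[OF that(1)] T[OF that(1)] that(2,3) by metis
  define \<iota> where "\<iota> = (\<lambda>x\<in>torus_pts n. \<lambda>a\<in>{..<N}. fst (snd (T (x,a))))"
  define \<beta> where "\<beta> = (\<lambda>x\<in>torus_pts n. \<lambda>a\<in>{..<N}. snd (snd (T (x,a))))"
  have Tform: "T (x,a) = ((x,a), \<iota> x a, \<beta> x a)" if "x \<in> torus_pts n" "a < N" for x a
  proof -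
    have "edge_white (T (x,a)) = (x,a)" using T[of "(x,a)"] that by simp
    then have "fst (T (x,a)) = (x,a)" unfolding edge_white_def .
    moreover have "\<iota> x a = fst (snd (T (x,a)))" "\<beta> x a = snd (snd (T (x,a)))"
      using that unfolding \<iota>_def \<beta>_def by simp_all
    ultimately show ?thesis by (metis prod.collapse)
  qed
  have Tbl: "T (x,a) \<in> blowup_edges D n N" if "x \<in> torus_pts n" "a < N" for x a
    using T[of "(x,a)"] that sub by blast
  have tb: "\<iota> x a < D \<and> \<beta> x a < N" if "x \<in> torus_pts n" "a < N" for x a
    using Tbl[OF that] unfolding Tform[OF that] blowup_edges_def by simp
  have \<iota>IT: "\<iota> \<in> IT D n N"
  proof -
    have "\<forall>x\<in>torus_pts n. \<forall>a<N. \<iota> x a < D" using tb by simp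
    then show ?thesis unfolding IT_def \<iota>_def by (auto simp: PiE_iff extensional_def)
  qed
  have \<beta>BT: "\<beta> \<in> BT n N"
  proof -
    have "\<forall>x\<in>torus_pts n. \<forall>a<N. \<beta> x a < N" using tb by simp
    then show ?thesis unfolding BT_def \<beta>_def by (auto simp: PiE_iff extensional_def)
  qed
  have eqT: "\<tau> = toM n N \<iota> \<beta>"
  proof
    show "\<tau> \<subseteq> toM n N \<iota> \<beta>"
    proof
      fix t assume t: "t \<in> \<tau>"
      then obtain x a i b where tt: "t = ((x,a),i,b)" "x \<in> torus_pts n" "a < N"
        using sub unfolding blowup_edges_def by blast
      then have "t = T (x,a)" using Tuniq[of "(x,a)" t] t unfolding edge_white_def by simp
      then have "t = ((x,a), \<iota> x a, \<beta> x a)" using Tform[OF tt(2,3)] by simp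
      then show "t \<in> toM n N \<iota> \<beta>" unfolding toM_mem using tt(2,3) by blast
    qed
  next
    show "toM n N \<iota> \<beta> \<subseteq> \<tau>"
    proof
      fix t assume "t \<in> toM n N \<iota> \<beta>"
      then obtain x a where xa: "x \<in> torus_pts n" "a < N" "t = ((x,a), \<iota> x a, \<beta> x a)"
        unfolding toM_mem by blast
      then have "t = T (x,a)" using Tform by simp
      then show "t \<in> \<tau>" using T[of "(x,a)"] xa by simp
    qed
  qed
  have fib: "\<beta> \<in> fib e v0 n N \<iota>"
    unfolding fib_def
  proof (intro CollectI conjI ballI \<beta>BT)
    fix y :: "int^'d" assume y: "y \<in> torus_pts n"
    let ?f = "\<lambda>(x,a). \<beta> x a"
    show "bij_betw ?f (Sy e v0 n N \<iota> y) {..<N}"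
      unfolding bij_betw_def
    proof (intro conjI)
      show "inj_on ?f (Sy e v0 n N \<iota> y)"
      proof (rule inj_onI)
        fix u u' assume u: "u \<in> Sy e v0 n N \<iota> y" and u': "u' \<in> Sy e v0 n N \<iota> y" and eq: "?f u = ?f u'"
        obtain x a where xa: "u = (x,a)" by force
        obtain x' a' where xa': "u' = (x',a')" by force
        have h: "x \<in> torus_pts n" "a < N" "sb e v0 n x (\<iota> x a) = y"
          "x' \<in> torus_pts n" "a' < N" "sb e v0 n x' (\<iota> x' a') = y"
          using u u' xa xa' unfolding Sy_def by auto
        have eqb: "\<beta> x' a' = \<beta> x a" using eq xa xa' by simp
        have e1: "edge_black e v0 n (T (x,a)) = (y, \<beta> x a)"
          unfolding Tform[OF h(1,2)] edge_black_def using h(3) unfolding sb_def by simp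
        have e2: "edge_black e v0 n (T (x',a')) = (y, \<beta> x a)"
          unfolding Tform[OF h(4,5)] edge_black_def using h(6) eqb unfolding sb_def by simp
        have yV: "(y, \<beta> x a) \<in> ?V" using y tb h by simp
        have m1: "T (x,a) \<in> \<tau>" using T[of "(x,a)"] h(1,2) by simp
        have m2: "T (x',a') \<in> \<tau>" using T[of "(x',a')"] h(4,5) by simp
        have "T (x,a) = T (x',a')"
          by (rule blu[OF m1 m2]) (simp_all only: e1 e2 yV)
        then have "((x,a), \<iota> x a, \<beta> x a) = ((x',a'), \<iota> x' a', \<beta> x' a')"
          unfolding Tform[OF h(1,2)] Tform[OF h(4,5)] .
        then show "u = u'" using xa xa' by simp
      qed
    next
      show "?f ` Sy e v0 n N \<iota> y = {..<N}"
      proof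
        show "?f ` Sy e v0 n N \<iota> y \<subseteq> {..<N}"
          using tb unfolding Sy_def by auto
      next
        show "{..<N} \<subseteq> ?f ` Sy e v0 n N \<iota> y"
        proof
          fix b assume b: "b \<in> {..<N}"
          then have "(y,b) \<in> ?V" using y by auto
          then obtain t where t: "t \<in> \<tau>" "edge_black e v0 n t = (y,b)" using blex by blast
          have "t \<in> toM n N \<iota> \<beta>" using t eqT by simp
          then obtain x a where xa: "t = ((x,a), \<iota> x a, \<beta> x a)" "x \<in> torus_pts n" "a < N"
            unfolding toM_mem by blast
          then have "(x,a) \<in> Sy e v0 n N \<iota> y" "\<beta> x a = b"
            using t unfolding Sy_def edge_black_def sb_def by auto
          then show "b \<in> ?f ` Sy e v0 n N \<iota> y" by force
        qed
      qed
    qed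
  qed
  show ?thesis
    by (rule image_eqI[of _ _ "(\<iota>,\<beta>)"]) (use eqT fib \<iota>IT in \<open>simp_all add: Good_def\<close>)
qed

lemma toM_bij:
  assumes "n \<ge> 1"
  shows "bij_betw (\<lambda>(\<iota>,\<beta>). toM n N \<iota> \<beta>) (Good D e v0 n N) (perfect_matchings D e v0 n N)"
  unfolding bij_betw_def
proof (intro conjI)
  show "inj_on (\<lambda>(\<iota>,\<beta>). toM n N \<iota> \<beta>) (Good D e v0 n N)"
    by (intro inj_onI) (auto dest: toM_inj)
  show "(\<lambda>(\<iota>,\<beta>). toM n N \<iota> \<beta>) ` Good D e v0 n N = perfect_matchings D e v0 n N"
    using toM_in[OF assms] toM_onto[OF assms] by auto
qed

lemma card_bij_funcs:
  assumes "finite A" "card A = N"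
  shows "card {g \<in> A \<rightarrow>\<^sub>E {..<N}. bij_betw g A {..<N}} = fact N"
proof -
  have eq: "{g \<in> A \<rightarrow>\<^sub>E {..<N}. bij_betw g A {..<N}} = {g \<in> A \<rightarrow>\<^sub>E {..<N}. inj_on g A}"
  proof (intro Collect_cong conj_cong refl)
    fix g assume g: "g \<in> A \<rightarrow>\<^sub>E {..<N}"
    show "bij_betw g A {..<N} \<longleftrightarrow> inj_on g A"
    proof
      assume "inj_on g A"
      moreover have "g ` A \<subseteq> {..<N}" using g by auto
      moreover have "card (g ` A) = card {..<N}" using \<open>inj_on g A\<close> assms by (simp add: card_image)
      ultimately show "bij_betw g A {..<N}" unfolding bij_betw_def
        by (simp add: card_subset_eq)
    qed (simp add: bij_betw_def)
  qed
  have "card {g \<in> A \<rightarrow>\<^sub>E {..<N}. inj_on g A} = N ^ (card A - card A) * prod ((-) N) {0..<card A}"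
    using card_inj_on_subset_funcset[of A "{..<N}" A] assms by simp
  also have "\<dots> = fact N" using assms by (simp add: fact_prod_rev)
  finally show ?thesis using eq by simp
qed

definition "Rf e v0 n N \<iota> \<beta> = (\<lambda>y\<in>torus_pts n. restrict (\<lambda>(x,a). \<beta> x a) (Sy e v0 n N \<iota> y))"
definition "Qf e v0 n N \<iota> G = (\<lambda>x\<in>torus_pts n. \<lambda>a\<in>{..<N}. G (sb e v0 n x (\<iota> x a)) (x,a) :: nat)"

lemma Sy_mem: "(x,a) \<in> Sy e v0 n N \<iota> y \<longleftrightarrow> x \<in> torus_pts n \<and> a < N \<and> sb e v0 n x (\<iota> x a) = y"
  unfolding Sy_def by simp

lemma sb_in: "n \<ge> 1 \<Longrightarrow> sb e v0 n x i \<in> torus_pts n"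
  unfolding sb_def by (rule tmod_in)

lemma card_fib:
  fixes e :: "nat \<Rightarrow> real^'d"
  assumes n: "n \<ge> 1" and bal: "\<forall>y\<in>torus_pts n. card (Sy e v0 n N \<iota> y) = N"
  shows "card (fib e v0 n N \<iota>) = fact N ^ card (torus_pts n :: (int^'d) set)"
proof -
  let ?X = "torus_pts n :: (int^'d) set"
  let ?S = "Sy e v0 n N \<iota>"
  let ?Tg = "PiE ?X (\<lambda>y. {g \<in> ?S y \<rightarrow>\<^sub>E {..<N}. bij_betw g (?S y) {..<N}})"
  have finS: "finite (?S y)" for y
  proof -
    have "?S y \<subseteq> ?X \<times> {..<N}" unfolding Sy_def by auto
    then show ?thesis using finite_torus by (rule finite_subset[OF _ finite_cartesian_product]) auto
  qed
  have bij: "bij_betw (Rf e v0 n N \<iota>) (fib e v0 n N \<iota>) ?Tg"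
  proof (rule bij_betw_byWitness[where f'="Qf e v0 n N \<iota>"])
    show "\<forall>\<beta>\<in>fib e v0 n N \<iota>. Qf e v0 n N \<iota> (Rf e v0 n N \<iota> \<beta>) = \<beta>"
    proof
      fix \<beta> assume \<beta>: "\<beta> \<in> fib e v0 n N \<iota>"
      then have \<beta>BT: "\<beta> \<in> BT n N" unfolding fib_def by blast
      show "Qf e v0 n N \<iota> (Rf e v0 n N \<iota> \<beta>) = \<beta>"
      proof (rule ext)
        fix x
        show "Qf e v0 n N \<iota> (Rf e v0 n N \<iota> \<beta>) x = \<beta> x"
        proof (cases "x \<in> ?X")
          case True
          show ?thesis
          proof (rule ext)
            fix a show "Qf e v0 n N \<iota> (Rf e v0 n N \<iota> \<beta>) x a = \<beta> x a"
            proof (cases "a < N")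
              case True
              then show ?thesis using \<open>x \<in> ?X\<close> sb_in[OF n, of e v0 x "\<iota> x a"]
                unfolding Qf_def Rf_def by (simp add: Sy_mem)
            next
              case False
              then show ?thesis using \<open>x \<in> ?X\<close> \<beta>BT unfolding Qf_def BT_def
                by (auto simp: PiE_iff extensional_def)
            qed
          qed
        next
          case False
          then show ?thesis using \<beta>BT unfolding Qf_def BT_def by (auto simp: PiE_iff extensional_def)
        qed
      qed
    qed
  next
    show "\<forall>G\<in>?Tg. Rf e v0 n N \<iota> (Qf e v0 n N \<iota> G) = G"
    proof
      fix G assume G: "G \<in> ?Tg"
      show "Rf e v0 n N \<iota> (Qf e v0 n N \<iota> G) = G"
      proof (rule ext)
        fix y
        show "Rf e v0 n N \<iota> (Qf e v0 n N \<iota> G) y = G y"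
        proof (cases "y \<in> ?X")
          case True
          have Gy: "G y \<in> ?S y \<rightarrow>\<^sub>E {..<N}" using G True by auto
          show ?thesis
          proof (rule ext)
            fix u show "Rf e v0 n N \<iota> (Qf e v0 n N \<iota> G) y u = G y u"
            proof (cases "u \<in> ?S y")
              case True
              obtain x a where u: "u = (x,a)" by force
              have h: "x \<in> ?X" "a < N" "sb e v0 n x (\<iota> x a) = y" using True u by (auto simp: Sy_mem)
              show ?thesis using True \<open>y \<in> ?X\<close> h u unfolding Rf_def Qf_def by simp
            next
              case False
              then show ?thesis using \<open>y \<in> ?X\<close> Gy unfolding Rf_def by (cases u) (auto simp: PiE_iff extensional_def)
            qed
          qed
        next
          case False
          then show ?thesis using G unfolding Rf_def by (auto simp: PiE_iff extensional_def)
        qed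
      qed
    qed
  next
    show "Rf e v0 n N \<iota> ` fib e v0 n N \<iota> \<subseteq> ?Tg"
    proof
      fix G assume "G \<in> Rf e v0 n N \<iota> ` fib e v0 n N \<iota>"
      then obtain \<beta> where \<beta>: "\<beta> \<in> fib e v0 n N \<iota>" and G: "G = Rf e v0 n N \<iota> \<beta>" by blast
      have bj: "bij_betw (\<lambda>(x,a). \<beta> x a) (?S y) {..<N}" if "y \<in> ?X" for y
        using \<beta> that unfolding fib_def by blast
      show "G \<in> ?Tg"
      proof (rule PiE_I)
        fix y assume y: "y \<in> ?X"
        have b1: "bij_betw (restrict (\<lambda>(x,a). \<beta> x a) (?S y)) (?S y) {..<N}"
          using bj[OF y] by (rule bij_betw_cong[THEN iffD1, rotated]) simp
        have b2: "restrict (\<lambda>(x,a). \<beta> x a) (?S y) \<in> ?S y \<rightarrow>\<^sub>E {..<N}"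
          using bij_betw_apply[OF bj[OF y]] by auto
        show "G y \<in> {g \<in> ?S y \<rightarrow>\<^sub>E {..<N}. bij_betw g (?S y) {..<N}}"
          using b1 b2 y unfolding G Rf_def by simp
      next
        fix y assume "y \<notin> ?X" then show "G y = undefined" unfolding G Rf_def by simp
      qed
    qed
  next
    show "Qf e v0 n N \<iota> ` ?Tg \<subseteq> fib e v0 n N \<iota>"
    proof
      fix \<beta> assume "\<beta> \<in> Qf e v0 n N \<iota> ` ?Tg"
      then obtain G where G: "G \<in> ?Tg" and \<beta>: "\<beta> = Qf e v0 n N \<iota> G" by blast
      have Gy: "G y \<in> ?S y \<rightarrow>\<^sub>E {..<N}" "bij_betw (G y) (?S y) {..<N}" if "y \<in> ?X" for y
        using G that by auto
      have agree: "(\<lambda>(x,a). \<beta> x a) u = G y u" if "y \<in> ?X" "u \<in> ?S y" for y u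
      proof -
        obtain x a where u: "u = (x,a)" by force
        have h: "x \<in> ?X" "a < N" "sb e v0 n x (\<iota> x a) = y" using that u by (auto simp: Sy_mem)
        show ?thesis using h u unfolding \<beta> Qf_def by simp
      qed
      have \<beta>BT: "\<beta> \<in> BT n N"
      proof -
        have "\<beta> x a < N" if "x \<in> ?X" "a < N" for x a
        proof -
          have "(x,a) \<in> ?S (sb e v0 n x (\<iota> x a))" using that by (simp add: Sy_mem)
          moreover have "sb e v0 n x (\<iota> x a) \<in> ?X" by (rule sb_in[OF n])
          ultimately have "G (sb e v0 n x (\<iota> x a)) (x,a) < N" using Gy by blast
          then show ?thesis using that unfolding \<beta> Qf_def by simp
        qed
        then show ?thesis unfolding BT_def \<beta> Qf_def by (auto simp: PiE_iff extensional_def)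
      qed
      show "\<beta> \<in> fib e v0 n N \<iota>"
        unfolding fib_def
      proof (intro CollectI conjI ballI \<beta>BT)
        fix y :: "int^'d" assume y: "y \<in> ?X"
        show "bij_betw (\<lambda>(x,a). \<beta> x a) (?S y) {..<N}"
          using Gy(2)[OF y] by (rule bij_betw_cong[THEN iffD1, rotated]) (simp add: agree[OF y])
      qed
    qed
  qed
  have "card (fib e v0 n N \<iota>) = card ?Tg" using bij by (rule bij_betw_same_card)
  also have "\<dots> = (\<Prod>y\<in>?X. card {g \<in> ?S y \<rightarrow>\<^sub>E {..<N}. bij_betw g (?S y) {..<N}})"
    using finite_torus by (rule card_PiE)
  also have "\<dots> = (\<Prod>y\<in>?X. fact N)"
    using bal finS card_bij_funcs by (intro prod.cong refl) auto
  finally show ?thesis by simp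
qed

lemma card_fib_le:
  fixes e :: "nat \<Rightarrow> real^'d"
  assumes n: "n \<ge> 1"
  shows "card (fib e v0 n N \<iota>) \<le> fact N ^ card (torus_pts n :: (int^'d) set)"
proof (cases "fib e v0 n N \<iota> = {}")
  case False
  then obtain \<beta> where \<beta>: "\<beta> \<in> fib e v0 n N \<iota>" by blast
  have "\<forall>y\<in>torus_pts n. card (Sy e v0 n N \<iota> y) = N"
  proof
    fix y :: "int^'d" assume "y \<in> torus_pts n"
    then have "bij_betw (\<lambda>(x,a). \<beta> x a) (Sy e v0 n N \<iota> y) {..<N}" using \<beta> unfolding fib_def by blast
    then show "card (Sy e v0 n N \<iota> y) = N" by (simp add: bij_betw_same_card)
  qed
  then have "card (fib e v0 n N \<iota>) = fact N ^ card (torus_pts n :: (int^'d) set)" by (rule card_fib[OF n])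
  then show ?thesis by simp
qed simp

definition "wt (w::nat\<Rightarrow>real) n N \<iota> = (\<Prod>x\<in>torus_pts n. \<Prod>a<N. w (\<iota> x a))"

lemma finite_IT: "finite (IT D n N)"
  unfolding IT_def by (intro finite_PiE finite_torus finite_lessThan)

lemma finite_fib: "finite (fib e v0 n N \<iota>)"
proof -
  have "finite (BT n N)" unfolding BT_def by (auto intro!: finite_PiE simp: finite_torus)
  then show ?thesis unfolding fib_def by (auto intro: rev_finite_subset)
qed

lemma match_weight_toM:
  "match_weight w (toM n N \<iota> \<beta>) = wt w n N \<iota>"
proof -
  have inj: "inj_on (\<lambda>(x,a). ((x,a), \<iota> x a, \<beta> x a)) (torus_pts n \<times> {..<N})"
    by (auto intro: inj_onI)
  have "match_weight w (toM n N \<iota> \<beta>) = (\<Prod>u\<in>torus_pts n \<times> {..<N}. w (edge_type ((\<lambda>(x,a). ((x,a), \<iota> x a, \<beta> x a)) u)))"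
    unfolding match_weight_def toM_def by (rule prod.reindex[OF inj, unfolded comp_def])
  also have "\<dots> = (\<Prod>u\<in>torus_pts n \<times> {..<N}. w ((\<lambda>(x,a). \<iota> x a) u))"
    by (intro prod.cong refl) (auto simp: edge_type_def)
  also have "\<dots> = wt w n N \<iota>"
    unfolding wt_def prod.cartesian_product by (intro prod.cong) auto
  finally show ?thesis .
qed

lemma sum_matchings:
  fixes e :: "nat \<Rightarrow> real^'d" and g :: "real \<Rightarrow> real"
  assumes n: "n \<ge> 1"
  shows "(\<Sum>\<tau>\<in>perfect_matchings D e v0 n N. g (match_weight w \<tau>)) =
         (\<Sum>\<iota>\<in>IT D n N. real (card (fib e v0 n N \<iota>)) * g (wt w n N \<iota>))"
proof -
  have "(\<Sum>\<tau>\<in>perfect_matchings D e v0 n N. g (match_weight w \<tau>)) =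
        (\<Sum>p\<in>Good D e v0 n N. g (match_weight w ((\<lambda>(\<iota>,\<beta>). toM n N \<iota> \<beta>) p)))"
    by (rule sum.reindex_bij_betw[OF toM_bij[OF n], symmetric])
  also have "\<dots> = (\<Sum>(\<iota>,\<beta>)\<in>Good D e v0 n N. g (match_weight w (toM n N \<iota> \<beta>)))"
    by (intro sum.cong) auto
  also have "\<dots> = (\<Sum>\<iota>\<in>IT D n N. \<Sum>\<beta>\<in>fib e v0 n N \<iota>. g (match_weight w (toM n N \<iota> \<beta>)))"
    unfolding Good_def by (rule sum.Sigma[symmetric]) (auto simp: finite_IT finite_fib)
  also have "\<dots> = (\<Sum>\<iota>\<in>IT D n N. real (card (fib e v0 n N \<iota>)) * g (wt w n N \<iota>))"
    by (simp add: match_weight_toM)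
  finally show ?thesis .
qed

lemma sum_wt_exp:
  fixes ll :: "nat \<Rightarrow> real"
  shows "(\<Sum>\<iota>\<in>(IT D n N :: ((int^'d) \<Rightarrow> nat \<Rightarrow> nat) set). wt w n N \<iota> * exp (s * (\<Sum>x\<in>torus_pts n. \<Sum>a<N. ll (\<iota> x a)))) =
         (\<Sum>j<D. w j * exp (s * ll j)) ^ (card (torus_pts n :: (int^'d) set) * N)"
proof -
  let ?X = "torus_pts n :: (int^'d) set"
  let ?G = "PiE {..<N} (\<lambda>_. {..<D})"
  have "(\<Sum>\<iota>\<in>IT D n N. wt w n N \<iota> * exp (s * (\<Sum>x\<in>?X. \<Sum>a<N. ll (\<iota> x a)))) =
        (\<Sum>\<iota>\<in>PiE ?X (\<lambda>_. ?G). \<Prod>x\<in>?X. (\<Prod>a<N. w (\<iota> x a) * exp (s * ll (\<iota> x a))))"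
    unfolding IT_def wt_def
    by (intro sum.cong refl) (simp add: sum_distrib_left exp_sum finite_torus prod.distrib)
  also have "\<dots> = (\<Prod>x\<in>?X. \<Sum>g\<in>?G. \<Prod>a<N. w (g a) * exp (s * ll (g a)))"
    by (rule prod_sum_PiE[symmetric]) (auto simp: finite_torus intro!: finite_PiE)
  also have "\<dots> = (\<Prod>x\<in>?X. \<Prod>a<N. \<Sum>j<D. w j * exp (s * ll j))"
    by (intro prod.cong refl prod_sum_PiE[symmetric]) auto
  also have "\<dots> = (\<Sum>j<D. w j * exp (s * ll j)) ^ (card ?X * N)"
    by (simp add: power_mult[symmetric] mult.commute)
  finally show ?thesis .
qed

lemma sum_card_fibers:
  assumes "g \<in> PiE {..<N} (\<lambda>_. {..<D::nat})"
  shows "(\<Sum>i<D. card {a\<in>{..<N::nat}. g a = i}) = N"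
proof -
  have eqU: "(\<Union>i\<in>{..<D}. {a\<in>{..<N}. g a = i}) = {..<N}" using assms by auto
  have "(\<Sum>i<D. card {a\<in>{..<N}. g a = i}) = card (\<Union>i\<in>{..<D}. {a\<in>{..<N}. g a = i})"
    by (rule card_UN_disjoint[symmetric]) auto
  also have "\<dots> = N" unfolding eqU by simp
  finally show ?thesis .
qed

lemma Sy_decomp:
  fixes e :: "nat \<Rightarrow> real^'d"
  assumes n: "n \<ge> 1" and \<iota>: "\<iota> \<in> IT D n N" and y: "y \<in> torus_pts n"
  shows "Sy e v0 n N \<iota> y = (\<Union>i\<in>{..<D}. (\<lambda>a. (tmod n (y - offset e v0 i), a)) `
            {a\<in>{..<N}. \<iota> (tmod n (y - offset e v0 i)) a = i})"
proof
  show "Sy e v0 n N \<iota> y \<subseteq> (\<Union>i\<in>{..<D}. (\<lambda>a. (tmod n (y - offset e v0 i), a)) `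
            {a\<in>{..<N}. \<iota> (tmod n (y - offset e v0 i)) a = i})"
  proof
    fix u assume u: "u \<in> Sy e v0 n N \<iota> y"
    obtain x a where xa: "u = (x,a)" by force
    have h: "x \<in> torus_pts n" "a < N" "tmod n (x + offset e v0 (\<iota> x a)) = y"
      using u xa by (auto simp: Sy_mem sb_def)
    have iD: "\<iota> x a < D" using \<iota> h unfolding IT_def by auto
    have "x = tmod n (y - offset e v0 (\<iota> x a))" using tmod_shift_iff[OF n h(1)] h(3) by blast
    then show "u \<in> (\<Union>i\<in>{..<D}. (\<lambda>a. (tmod n (y - offset e v0 i), a)) `
            {a\<in>{..<N}. \<iota> (tmod n (y - offset e v0 i)) a = i})"
      using xa h iD by (intro UN_I[of "\<iota> x a"]) auto
  qed
next
  show "(\<Union>i\<in>{..<D}. (\<lambda>a. (tmod n (y - offset e v0 i), a)) `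
            {a\<in>{..<N}. \<iota> (tmod n (y - offset e v0 i)) a = i}) \<subseteq> Sy e v0 n N \<iota> y"
  proof clarify
    fix i a assume h: "i < D" "a < N" "\<iota> (tmod n (y - offset e v0 i)) a = i"
    let ?x = "tmod n (y - offset e v0 i)"
    have x: "?x \<in> torus_pts n" by (rule tmod_in[OF n])
    have "tmod n (?x + offset e v0 i) = y" using tmod_shift_iff[OF n x] y by blast
    then show "(?x, a) \<in> Sy e v0 n N \<iota> y" using h x by (simp add: Sy_mem sb_def)
  qed
qed

lemma card_Sy:
  fixes e :: "nat \<Rightarrow> real^'d"
  assumes n: "n \<ge> 1" and \<iota>: "\<iota> \<in> IT D n N" and y: "y \<in> torus_pts n"
  shows "card (Sy e v0 n N \<iota> y) = (\<Sum>i<D. card {a\<in>{..<N}. \<iota> (tmod n (y - offset e v0 i)) a = i})"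
  unfolding Sy_decomp[OF assms]
  by (subst card_UN_disjoint) (auto simp: card_image inj_on_def)

definition "cnt D N g = (\<lambda>i\<in>{..<D}. card {a\<in>{..<N::nat}. g a = (i::nat)})"


lemma bal_mode:
  fixes e :: "nat \<Rightarrow> real^'d"
  assumes n: "n \<ge> 1"
    and \<iota>: "\<iota> \<in> PiE (torus_pts n) (\<lambda>_. {g \<in> PiE {..<N} (\<lambda>_. {..<D}). cnt D N g = cs})"
    and sumcs: "(\<Sum>i<D. cs i) = N" and y: "y \<in> torus_pts n"
  shows "card (Sy e v0 n N \<iota> y) = N"
proof -
  have \<iota>IT: "\<iota> \<in> IT D n N" using \<iota> unfolding IT_def by (auto simp: PiE_iff)
  have "card (Sy e v0 n N \<iota> y) = (\<Sum>i<D. card {a\<in>{..<N}. \<iota> (tmod n (y - offset e v0 i)) a = i})"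
    by (rule card_Sy[OF n \<iota>IT y])
  also have "\<dots> = (\<Sum>i<D. cs i)"
  proof (rule sum.cong[OF refl])
    fix i assume i: "i \<in> {..<D}"
    have xX: "tmod n (y - offset e v0 i) \<in> torus_pts n" by (rule tmod_in[OF n])
    have "cnt D N (\<iota> (tmod n (y - offset e v0 i))) = cs" using PiE_mem[OF \<iota> xX] by simp
    then have "cnt D N (\<iota> (tmod n (y - offset e v0 i))) i = cs i" by simp
    then show "card {a\<in>{..<N}. \<iota> (tmod n (y - offset e v0 i)) a = i} = cs i"
      using i unfolding cnt_def by simp
  qed
  also have "\<dots> = N" by (rule sumcs)
  finally show ?thesis .
qed

lemma mode_bound:
  fixes e :: "nat \<Rightarrow> real^'d"
  assumes n: "n \<ge> 1" and D: "D \<ge> 1" and wpos: "\<forall>i<D. w i > 0"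
  shows "\<exists>M \<subseteq> (IT D n N :: ((int^'d) \<Rightarrow> nat \<Rightarrow> nat) set).
     (\<forall>\<iota>\<in>M. \<forall>y\<in>torus_pts n. card (Sy e v0 n N \<iota> y) = N) \<and>
     (\<Sum>j<D. w j) ^ (card (torus_pts n :: (int^'d) set) * N) / (real (N+1)) ^ (D * card (torus_pts n :: (int^'d) set))
       \<le> (\<Sum>\<iota>\<in>M. wt w n N \<iota>)"
proof -
  let ?X = "torus_pts n :: (int^'d) set"
  let ?G = "PiE {..<N} (\<lambda>_. {..<D})"
  let ?W = "(\<Sum>j<D. w j)"
  define wg where "wg g = (\<Prod>a<N. w (g a))" for g
  define h where "h c = (\<Sum>g\<in>{g\<in>?G. cnt D N g = c}. wg g)" for c
  define Cnt where "Cnt = cnt D N ` ?G"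
  have finG: "finite ?G" by (intro finite_PiE) auto
  have wgpos: "wg g > 0" if "g \<in> ?G" for g
    unfolding wg_def using that wpos by (intro prod_pos) auto
  have hnn: "h c \<ge> 0" for c unfolding h_def by (intro sum_nonneg) (force intro: less_imp_le wgpos)
  have sumG: "(\<Sum>g\<in>?G. wg g) = ?W ^ N"
    unfolding wg_def using prod_sum_PiE[of "{..<N}" "\<lambda>_. {..<D}" "\<lambda>_ j. w j", symmetric] by simp
  have finC: "finite Cnt" unfolding Cnt_def using finG by simp
  have CntNE: "Cnt \<noteq> {}"
  proof -
    have "(\<lambda>a\<in>{..<N}. 0) \<in> ?G" using D by auto
    then show ?thesis unfolding Cnt_def by blast
  qed
  have cardC: "card Cnt \<le> (N+1) ^ D"
  proof -
    have "Cnt \<subseteq> PiE {..<D} (\<lambda>_. {..N})"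
    proof
      fix c assume "c \<in> Cnt"
      then obtain g where g: "g \<in> ?G" "c = cnt D N g" unfolding Cnt_def by blast
      have "card {a\<in>{..<N}. g a = i} \<le> N" for i
        using card_mono[of "{..<N}" "{a\<in>{..<N}. g a = i}"] by auto
      then show "c \<in> PiE {..<D} (\<lambda>_. {..N})" unfolding g cnt_def by auto
    qed
    then have "card Cnt \<le> card (PiE {..<D} (\<lambda>_. {..N}))"
      by (intro card_mono) (auto intro!: finite_PiE)
    also have "\<dots> = (N+1)^D" by (simp add: card_PiE)
    finally show ?thesis .
  qed
  have sumC: "?W ^ N = (\<Sum>c\<in>Cnt. h c)"
    unfolding sumG[symmetric] h_def Cnt_def by (rule sum.image_gen[OF finG])
  obtain cs where cs: "cs \<in> Cnt" "\<forall>c\<in>Cnt. h c \<le> h cs"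
  proof -
    have "Max (h ` Cnt) \<in> h ` Cnt" using finC CntNE by (intro Max_in) auto
    then obtain cs where "cs \<in> Cnt" "h cs = Max (h ` Cnt)" by auto
    moreover have "\<forall>c\<in>Cnt. h c \<le> Max (h ` Cnt)" using finC by auto
    ultimately show ?thesis using that by auto
  qed
  have Wpos: "?W > 0" using D wpos by (intro sum_pos) (auto simp: lessThan_empty_iff)
  have "?W ^ N \<le> real (card Cnt) * h cs"
    unfolding sumC by (rule sum_bounded_above) (use cs in auto)
  also have "\<dots> \<le> real ((N+1)^D) * h cs"
  proof (rule mult_right_mono)
    have "real (card Cnt) \<le> real ((N+1)^D)" using cardC by (simp only: of_nat_le_iff)
    then show "real (card Cnt) \<le> real ((N+1)^D)" .
  qed (rule hnn)
  finally have hcs: "?W ^ N / real (N+1) ^ D \<le> h cs"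
    by (simp add: divide_le_eq mult.commute)
  obtain g0 where g0: "g0 \<in> ?G" "cs = cnt D N g0" using cs(1) unfolding Cnt_def by blast
  have sumcs: "(\<Sum>i<D. cs i) = N"
    unfolding g0(2) cnt_def using sum_card_fibers[OF g0(1)] by simp
  define M where "M = PiE ?X (\<lambda>_. {g\<in>?G. cnt D N g = cs})"
  have MIT: "M \<subseteq> IT D n N" unfolding M_def IT_def by (intro PiE_mono) auto
  have bal: "\<forall>y\<in>?X. card (Sy e v0 n N \<iota> y) = N" if \<iota>: "\<iota> \<in> M" for \<iota>
    using bal_mode[OF n \<iota>[unfolded M_def] sumcs] by blast
  have "(\<Sum>\<iota>\<in>M. wt w n N \<iota>) = (\<Sum>\<iota>\<in>M. \<Prod>x\<in>?X. wg (\<iota> x))"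
    unfolding wt_def wg_def by simp
  also have "\<dots> = (\<Prod>x\<in>?X. h cs)"
    unfolding M_def h_def by (rule prod_sum_PiE[symmetric]) (auto simp: finite_torus finG)
  also have "\<dots> = h cs ^ card ?X" by simp
  finally have sM: "(\<Sum>\<iota>\<in>M. wt w n N \<iota>) = h cs ^ card ?X" .
  have "?W ^ (card ?X * N) / real (N+1) ^ (D * card ?X) = (?W ^ N / real (N+1) ^ D) ^ card ?X"
    by (simp add: power_divide power_mult[symmetric] mult.commute)
  also have "\<dots> \<le> h cs ^ card ?X"
    using hcs Wpos by (intro power_mono) auto
  finally have le: "?W ^ (card ?X * N) / real (N+1) ^ (D * card ?X) \<le> h cs ^ card ?X" .
  show ?thesis
  proof (intro exI[of _ M] conjI)
    show "M \<subseteq> IT D n N" by (rule MIT)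
    show "\<forall>\<iota>\<in>M. \<forall>y\<in>?X. card (Sy e v0 n N \<iota> y) = N" using bal by blast
    show "?W ^ (card ?X * N) / real (N+1) ^ (D * card ?X) \<le> (\<Sum>\<iota>\<in>M. wt w n N \<iota>)"
      using le unfolding sM .
  qed
qed

definition "phi ll n N \<iota> = (\<Sum>x\<in>torus_pts n. \<Sum>a<N. ll (\<iota> x a))"

lemma wt_pos:
  assumes "\<forall>i<D. w i > 0" "\<iota> \<in> IT D n N"
  shows "wt w n N \<iota> > 0"
  using assms unfolding wt_def IT_def by (intro prod_pos) (auto simp: PiE_iff)

lemma chernoff_rate:
  fixes ll q :: "nat \<Rightarrow> real"
  assumes q0: "\<forall>j<D. q j \<ge> 0" and q1: "(\<Sum>j<D. q j) = 1" and l0: "\<forall>j<D. ll j \<ge> 0" and eps: "\<epsilon> > 0"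
  shows "\<exists>s>0. exp (-s*((\<Sum>j<D. q j * ll j) + \<epsilon>)) * (\<Sum>j<D. q j * exp (s * ll j)) < 1"
proof -
  define S1 where "S1 = (\<Sum>j<D. ll j)"
  have S1: "S1 \<ge> 0" unfolding S1_def using l0 by (intro sum_nonneg) auto
  have llS: "ll j \<le> S1" if "j < D" for j
    unfolding S1_def using l0 that by (intro member_le_sum) auto
  define s where "s = min (1/(S1+1)) (\<epsilon>/(S1^2+1))"
  have s0: "s > 0"
  proof -
    have "S1^2 + 1 > 0" by (simp add: add_nonneg_pos)
    then show ?thesis unfolding s_def using S1 eps by simp
  qed
  have s1: "s * S1 \<le> 1"
  proof -
    have "s \<le> 1/(S1+1)" unfolding s_def by simp
    then have "s * S1 \<le> 1/(S1+1) * S1" using S1 by (intro mult_right_mono) auto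
    also have "\<dots> \<le> 1" using S1 by (simp add: field_simps)
    finally show ?thesis .
  qed
  have s2: "s * S1^2 < \<epsilon>"
  proof -
    have "s \<le> \<epsilon>/(S1^2+1)" unfolding s_def by simp
    then have "s * S1^2 \<le> \<epsilon>/(S1^2+1) * S1^2" by (intro mult_right_mono) auto
    also have "\<dots> < \<epsilon>" using eps by (simp add: field_simps add_pos_nonneg)
    finally show ?thesis .
  qed
  define \<mu> where "\<mu> = (\<Sum>j<D. q j * ll j)"
  define C2 where "C2 = (\<Sum>j<D. q j * ll j ^ 2)"
  have C2: "C2 \<le> S1^2"
  proof -
    have "C2 \<le> (\<Sum>j<D. q j * S1^2)"
      unfolding C2_def using q0 l0 llS by (intro sum_mono mult_left_mono power_mono) auto
    also have "\<dots> = S1^2" using q1 by (simp add: sum_distrib_right[symmetric])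
    finally show ?thesis .
  qed
  have "(\<Sum>j<D. q j * exp (s * ll j)) \<le> (\<Sum>j<D. q j * (1 + s * ll j + (s * ll j)^2))"
  proof (rule sum_mono)
    fix j assume j: "j \<in> {..<D}"
    have "0 \<le> s * ll j" using s0 l0 j by auto
    moreover have "s * ll j \<le> 1" using s1 llS[of j] j s0 by (meson lessThan_iff mult_left_mono order_trans less_imp_le)
    ultimately have "exp (s * ll j) \<le> 1 + s * ll j + (s * ll j)^2" by (rule exp_bound)
    then show "q j * exp (s * ll j) \<le> q j * (1 + s * ll j + (s * ll j)^2)" using q0 j by (intro mult_left_mono) auto
  qed
  also have "\<dots> = 1 + s * \<mu> + s^2 * C2"
    unfolding \<mu>_def C2_def using q1
    by (simp add: algebra_simps sum.distrib sum_distrib_left power_mult_distrib)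
  also have "\<dots> \<le> exp (s * \<mu> + s^2 * C2)" by (rule exp_ge_add_one_self[unfolded add.commute[of 1]] | simp add: add.assoc)
  finally have b: "(\<Sum>j<D. q j * exp (s * ll j)) \<le> exp (s * \<mu> + s^2 * C2)" .
  have "exp (-s*(\<mu> + \<epsilon>)) * (\<Sum>j<D. q j * exp (s * ll j)) \<le> exp (-s*(\<mu> + \<epsilon>)) * exp (s * \<mu> + s^2 * C2)"
    using b by (intro mult_left_mono) auto
  also have "\<dots> = exp (s * (s * C2 - \<epsilon>))" by (simp add: exp_add[symmetric] algebra_simps power2_eq_square)
  also have "\<dots> < 1"
  proof -
    have "s * C2 \<le> s * S1^2" using C2 s0 by (intro mult_left_mono) auto
    then have "s * C2 - \<epsilon> < 0" using s2 by linarith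
    then have "s * (s * C2 - \<epsilon>) < 0" using s0 by (simp add: mult_pos_neg)
    then show ?thesis by simp
  qed
  finally show ?thesis using s0 unfolding \<mu>_def by blast
qed

lemma chernoff:
  fixes ll :: "nat \<Rightarrow> real"
  assumes D: "D \<ge> 1" and wpos: "\<forall>i<D. w i > 0" and l0: "\<forall>j<D. ll j \<ge> 0" and eps: "\<epsilon> > 0"
  shows "\<exists>\<rho>. 0 < \<rho> \<and> \<rho> < 1 \<and> (\<forall>n N.
     (\<Sum>\<iota>\<in>{\<iota>\<in>(IT D n N :: ((int^'d) \<Rightarrow> nat \<Rightarrow> nat) set).
         phi ll n N \<iota> \<ge> ((\<Sum>j<D. w j / (\<Sum>i<D. w i) * ll j) + \<epsilon>) * real (card (torus_pts n :: (int^'d) set) * N)}.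
        wt w n N \<iota>) \<le> ((\<Sum>i<D. w i) * \<rho>) ^ (card (torus_pts n :: (int^'d) set) * N))"
proof -
  define W where "W = (\<Sum>i<D. w i)"
  have W: "W > 0" unfolding W_def using D wpos by (intro sum_pos) (auto simp: lessThan_empty_iff)
  define q where "q j = w j / W" for j
  have q0: "\<forall>j<D. q j \<ge> 0" unfolding q_def using wpos W by (auto intro: less_imp_le)
  have q1: "(\<Sum>j<D. q j) = 1" unfolding q_def W_def[symmetric] using W by (simp add: sum_divide_distrib[symmetric] W_def)
  define \<mu> where "\<mu> = (\<Sum>j<D. q j * ll j)"
  obtain s where s0: "s > 0" and sr: "exp (-s*(\<mu> + \<epsilon>)) * (\<Sum>j<D. q j * exp (s * ll j)) < 1"
    using chernoff_rate[OF q0 q1 l0 eps] unfolding \<mu>_def by blast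
  define \<rho> where "\<rho> = exp (-s*(\<mu> + \<epsilon>)) * (\<Sum>j<D. q j * exp (s * ll j))"
  have \<rho>0: "\<rho> > 0"
  proof -
    have "(\<Sum>j<D. q j * exp (s * ll j)) > 0"
    proof (rule sum_pos)
      show "{..<D} \<noteq> {}" using D by (auto simp: lessThan_empty_iff)
      fix j assume "j \<in> {..<D}"
      then have "q j > 0" unfolding q_def using wpos W by simp
      then show "q j * exp (s * ll j) > 0" by simp
    qed simp
    then show ?thesis unfolding \<rho>_def by simp
  qed
  have key: "(\<Sum>\<iota>\<in>{\<iota>\<in>(IT D n N :: ((int^'d) \<Rightarrow> nat \<Rightarrow> nat) set).
         phi ll n N \<iota> \<ge> (\<mu> + \<epsilon>) * real (card (torus_pts n :: (int^'d) set) * N)}.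
        wt w n N \<iota>) \<le> (W * \<rho>) ^ (card (torus_pts n :: (int^'d) set) * N)" for n N
  proof -
    let ?m = "card (torus_pts n :: (int^'d) set) * N"
    let ?I = "IT D n N :: ((int^'d) \<Rightarrow> nat \<Rightarrow> nat) set"
    let ?B = "{\<iota>\<in>?I. phi ll n N \<iota> \<ge> (\<mu> + \<epsilon>) * real ?m}"
    have "(\<Sum>\<iota>\<in>?B. wt w n N \<iota>) \<le> (\<Sum>\<iota>\<in>?B. wt w n N \<iota> * exp (s * (phi ll n N \<iota> - (\<mu> + \<epsilon>) * real ?m)))"
    proof (rule sum_mono)
      fix \<iota> assume "\<iota> \<in> ?B"
      then have "\<iota> \<in> ?I" "phi ll n N \<iota> - (\<mu> + \<epsilon>) * real ?m \<ge> 0" by auto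
      then have "wt w n N \<iota> > 0" "exp (s * (phi ll n N \<iota> - (\<mu> + \<epsilon>) * real ?m)) \<ge> 1"
        using wt_pos[OF wpos] s0 by auto
      then show "wt w n N \<iota> \<le> wt w n N \<iota> * exp (s * (phi ll n N \<iota> - (\<mu> + \<epsilon>) * real ?m))"
        by simp
    qed
    also have "\<dots> \<le> (\<Sum>\<iota>\<in>?I. wt w n N \<iota> * exp (s * (phi ll n N \<iota> - (\<mu> + \<epsilon>) * real ?m)))"
    proof (rule sum_mono2[OF finite_IT])
      show "?B \<subseteq> ?I" by blast
    next
      fix \<iota> assume "\<iota> \<in> ?I - ?B"
      then have "\<iota> \<in> ?I" by blast
      then have "wt w n N \<iota> > 0" using wt_pos[OF wpos] by blast
      then show "0 \<le> wt w n N \<iota> * exp (s * (phi ll n N \<iota> - (\<mu> + \<epsilon>) * real ?m))" by simp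
    qed
    also have "\<dots> = exp (- s * (\<mu> + \<epsilon>) * real ?m) * (\<Sum>\<iota>\<in>?I. wt w n N \<iota> * exp (s * phi ll n N \<iota>))"
    proof -
      have t: "exp (s * (p - C)) = exp (- s * C) * exp (s * p)" for p C :: real
        by (simp add: exp_add[symmetric] algebra_simps)
      show ?thesis unfolding t sum_distrib_left by (rule sum.cong[OF refl]) (simp add: algebra_simps)
    qed
    also have "(\<Sum>\<iota>\<in>?I. wt w n N \<iota> * exp (s * phi ll n N \<iota>)) = (\<Sum>j<D. w j * exp (s * ll j)) ^ ?m"
      unfolding phi_def by (rule sum_wt_exp)
    also have "(\<Sum>j<D. w j * exp (s * ll j)) = W * (\<Sum>j<D. q j * exp (s * ll j))"
      unfolding q_def using W by (simp add: sum_distrib_left)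
    also have "exp (- s * (\<mu> + \<epsilon>) * real ?m) = exp (- s * (\<mu> + \<epsilon>)) ^ ?m"
      by (simp add: exp_of_nat_mult[symmetric] mult.commute)
    also have "exp (- s * (\<mu> + \<epsilon>)) ^ ?m * (W * (\<Sum>j<D. q j * exp (s * ll j))) ^ ?m = (W * \<rho>) ^ ?m"
      unfolding \<rho>_def by (simp add: power_mult_distrib[symmetric] mult.commute mult.left_commute)
    finally show ?thesis .
  qed
  have \<rho>1: "\<rho> < 1" using sr unfolding \<rho>_def .
  have \<mu>eq: "\<mu> = (\<Sum>j<D. w j / (\<Sum>i<D. w i) * ll j)" unfolding \<mu>_def q_def W_def ..
  show ?thesis
  proof (intro exI[of _ \<rho>] conjI allI \<rho>0 \<rho>1)
    fix n N
    show "(\<Sum>\<iota>\<in>{\<iota>\<in>(IT D n N :: ((int^'d) \<Rightarrow> nat \<Rightarrow> nat) set).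
         phi ll n N \<iota> \<ge> ((\<Sum>j<D. w j / (\<Sum>i<D. w i) * ll j) + \<epsilon>) * real (card (torus_pts n :: (int^'d) set) * N)}.
        wt w n N \<iota>) \<le> ((\<Sum>i<D. w i) * \<rho>) ^ (card (torus_pts n :: (int^'d) set) * N)"
      using key[of n N] unfolding \<mu>eq W_def .
  qed
qed

lemma ln_wt:
  assumes wpos: "\<forall>i<D. w i > 0" and \<iota>: "\<iota> \<in> IT D n N"
  shows "ln (wt w n N \<iota>) = phi (\<lambda>j. ln (w j)) n N \<iota>"
proof -
  have v: "w (\<iota> x a) > 0" if "x \<in> torus_pts n" "a < N" for x a
    using \<iota> wpos that unfolding IT_def by (auto simp: PiE_iff)
  have "ln (wt w n N \<iota>) = (\<Sum>x\<in>torus_pts n. ln (\<Prod>a<N. w (\<iota> x a)))"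
    unfolding wt_def using v by (intro ln_prod finite_torus) (auto intro!: prod_pos simp: less_imp_neq[symmetric])
  also have "\<dots> = (\<Sum>x\<in>torus_pts n. \<Sum>a<N. ln (w (\<iota> x a)))"
    using v by (intro sum.cong[OF refl] ln_prod) (auto simp: less_imp_neq[symmetric])
  finally show ?thesis unfolding phi_def .
qed

lemma entropy_eq:
  fixes e :: "nat \<Rightarrow> real^'d" and v0 :: "real^'d" and N n D :: nat and w :: "nat \<Rightarrow> real"
  assumes n: "n \<ge> 1" and D: "D \<ge> 1" and wpos: "\<forall>i<D. w i > 0"
  defines "F \<equiv> fact N ^ card (torus_pts n :: (int^'d) set) :: real"
  defines "A \<equiv> (\<Sum>\<iota>\<in>(IT D n N :: ((int^'d) \<Rightarrow> nat \<Rightarrow> nat) set). real (card (fib e v0 n N \<iota>)) / F * wt w n N \<iota>)"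
  defines "E \<equiv> (\<Sum>\<iota>\<in>(IT D n N :: ((int^'d) \<Rightarrow> nat \<Rightarrow> nat) set). real (card (fib e v0 n N \<iota>)) / F * wt w n N \<iota> * phi (\<lambda>j. ln (w j)) n N \<iota>)"
  shows "A > 0 \<and> boltzmann_entropy D e v0 w n N - real (card (torus_pts n :: (int^'d) set)) * ln (fact N) = ln A - E / A"
proof -
  let ?X = "torus_pts n :: (int^'d) set"
  let ?I = "IT D n N :: ((int^'d) \<Rightarrow> nat \<Rightarrow> nat) set"
  let ?c = "\<lambda>\<iota>. real (card (fib e v0 n N \<iota>))"
  have F0: "F > 0" unfolding F_def by simp
  obtain M where M: "M \<subseteq> ?I" "\<forall>\<iota>\<in>M. \<forall>y\<in>?X. card (Sy e v0 n N \<iota> y) = N"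
    "(\<Sum>j<D. w j) ^ (card ?X * N) / (real (N+1)) ^ (D * card ?X) \<le> (\<Sum>\<iota>\<in>M. wt w n N \<iota>)"
    using mode_bound[OF n D wpos, of N e v0] by blast
  have Wpos: "(\<Sum>j<D. w j) > 0" using D wpos by (intro sum_pos) (auto simp: lessThan_empty_iff)
  have "(\<Sum>\<iota>\<in>M. wt w n N \<iota>) = (\<Sum>\<iota>\<in>M. ?c \<iota> / F * wt w n N \<iota>)"
  proof (rule sum.cong[OF refl])
    fix \<iota> assume "\<iota> \<in> M"
    then have "card (fib e v0 n N \<iota>) = fact N ^ card ?X" using card_fib[OF n] M(2) by blast
    then have "?c \<iota> = F" unfolding F_def by simp
    then show "wt w n N \<iota> = ?c \<iota> / F * wt w n N \<iota>" using F0 by simp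
  qed
  also have "\<dots> \<le> A"
    unfolding A_def
  proof (rule sum_mono2[OF finite_IT M(1)])
    fix \<iota> assume "\<iota> \<in> ?I - M"
    then have "wt w n N \<iota> > 0" using wt_pos[OF wpos] by blast
    then show "0 \<le> ?c \<iota> / F * wt w n N \<iota>" using F0 by simp
  qed
  finally have "(\<Sum>j<D. w j) ^ (card ?X * N) / (real (N+1)) ^ (D * card ?X) \<le> A" using M(3) by linarith
  moreover have "(\<Sum>j<D. w j) ^ (card ?X * N) / (real (N+1)) ^ (D * card ?X) > 0" using Wpos by simp
  ultimately have A0: "A > 0" by linarith
  define Z where "Z = partition_fn D e v0 w n N"
  have Z: "Z = (\<Sum>\<iota>\<in>?I. ?c \<iota> * wt w n N \<iota>)"
  proof -
    have "(\<Sum>\<tau>\<in>perfect_matchings D e v0 n N. (\<lambda>v. v) (match_weight w \<tau>)) =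
          (\<Sum>\<iota>\<in>?I. ?c \<iota> * (\<lambda>v. v) (wt w n N \<iota>))"
      by (rule sum_matchings[OF n])
    then show ?thesis unfolding Z_def partition_fn_def by simp
  qed
  have ZFA: "Z = F * A" unfolding Z A_def sum_distrib_left using F0
    by (intro sum.cong refl) simp
  have Z0: "Z > 0" using ZFA F0 A0 by simp
  have "boltzmann_entropy D e v0 w n N = - (\<Sum>\<tau>\<in>perfect_matchings D e v0 n N.
          (\<lambda>v. v / Z * ln (v / Z)) (match_weight w \<tau>))"
    unfolding boltzmann_entropy_def boltzmann_def Z_def by simp
  also have "\<dots> = - (\<Sum>\<iota>\<in>?I. ?c \<iota> * (wt w n N \<iota> / Z * ln (wt w n N \<iota> / Z)))"
    by (subst sum_matchings[OF n]) simp
  also have "\<dots> = - (\<Sum>\<iota>\<in>?I. ?c \<iota> * wt w n N \<iota> * phi (\<lambda>j. ln (w j)) n N \<iota> / Z - ln Z * (?c \<iota> * wt w n N \<iota> / Z))"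
  proof -
    have "?c \<iota> * (wt w n N \<iota> / Z * ln (wt w n N \<iota> / Z)) =
          ?c \<iota> * wt w n N \<iota> * phi (\<lambda>j. ln (w j)) n N \<iota> / Z - ln Z * (?c \<iota> * wt w n N \<iota> / Z)"
      if "\<iota> \<in> ?I" for \<iota>
    proof -
      have h: "ln (wt w n N \<iota> / Z) = phi (\<lambda>j. ln (w j)) n N \<iota> - ln Z"
        using wt_pos[OF wpos that] Z0 ln_wt[OF wpos that] by (simp add: ln_div)
      show ?thesis unfolding h using Z0 by (simp add: field_simps)
    qed
    then show ?thesis by (metis (no_types, lifting) sum.cong)
  qed
  also have "\<dots> = ln Z * ((\<Sum>\<iota>\<in>?I. ?c \<iota> * wt w n N \<iota>) / Z) - (\<Sum>\<iota>\<in>?I. ?c \<iota> * wt w n N \<iota> * phi (\<lambda>j. ln (w j)) n N \<iota>) / Z"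
    by (simp add: sum_subtractf sum_divide_distrib sum_distrib_left)
  also have "(\<Sum>\<iota>\<in>?I. ?c \<iota> * wt w n N \<iota>) / Z = 1" using Z Z0 by simp
  also have "(\<Sum>\<iota>\<in>?I. ?c \<iota> * wt w n N \<iota> * phi (\<lambda>j. ln (w j)) n N \<iota>) = F * E"
    unfolding E_def sum_distrib_left using F0 by (intro sum.cong refl) simp
  also have "ln Z = ln F + ln A" using ZFA F0 A0 by (simp add: ln_mult)
  also have "ln F = real (card ?X) * ln (fact N)" unfolding F_def by (simp add: ln_realpow)
  finally have "boltzmann_entropy D e v0 w n N = real (card ?X) * ln (fact N) + ln A - F * E / Z" by simp
  also have "F * E / Z = E / A" using ZFA F0 by simp
  finally show ?thesis using A0 by simp
qed

definition Aof :: "nat \<Rightarrow> (nat \<Rightarrow> real^'d) \<Rightarrow> real^'d \<Rightarrow> (nat \<Rightarrow> real) \<Rightarrow> nat \<Rightarrow> nat \<Rightarrow> real" where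
  "Aof D e v0 w n N = (\<Sum>\<iota>\<in>(IT D n N :: ((int^'d) \<Rightarrow> nat \<Rightarrow> nat) set).
     real (card (fib e v0 n N \<iota>)) / (fact N ^ card (torus_pts n :: (int^'d) set)) * wt w n N \<iota>)"

definition Eof :: "nat \<Rightarrow> (nat \<Rightarrow> real^'d) \<Rightarrow> real^'d \<Rightarrow> (nat \<Rightarrow> real) \<Rightarrow> nat \<Rightarrow> nat \<Rightarrow> real" where
  "Eof D e v0 w n N = (\<Sum>\<iota>\<in>(IT D n N :: ((int^'d) \<Rightarrow> nat \<Rightarrow> nat) set).
     real (card (fib e v0 n N \<iota>)) / (fact N ^ card (torus_pts n :: (int^'d) set)) * wt w n N \<iota>
       * phi (\<lambda>j. ln (w j)) n N \<iota>)"

lemma entropy_eq':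
  fixes e :: "nat \<Rightarrow> real^'d"
  assumes n: "n \<ge> 1" and D: "D \<ge> 1" and wpos: "\<forall>i<D. w i > 0"
  shows "Aof D e v0 w n N > 0 \<and> boltzmann_entropy D e v0 w n N - real (card (torus_pts n :: (int^'d) set)) * ln (fact N)
     = ln (Aof D e v0 w n N) - Eof D e v0 w n N / Aof D e v0 w n N"
  using entropy_eq[OF n D wpos, of e v0 N] unfolding Aof_def Eof_def by simp

lemma A_upper:
  fixes e :: "nat \<Rightarrow> real^'d"
  assumes n: "n \<ge> 1" and wpos: "\<forall>i<D. w i > 0"
  shows "Aof D e v0 w n N \<le> (\<Sum>j<D. w j) ^ (card (torus_pts n :: (int^'d) set) * N)"
proof -
  let ?I = "IT D n N :: ((int^'d) \<Rightarrow> nat \<Rightarrow> nat) set"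
  have F0: "(fact N ^ card (torus_pts n :: (int^'d) set) :: real) > 0" by simp
  have "Aof D e v0 w n N \<le> (\<Sum>\<iota>\<in>?I. wt w n N \<iota>)"
    unfolding Aof_def
  proof (rule sum_mono)
    fix \<iota> assume \<iota>: "\<iota> \<in> ?I"
    have "real (card (fib e v0 n N \<iota>)) \<le> real (fact N ^ card (torus_pts n :: (int^'d) set))"
      using card_fib_le[OF n, of e v0 N \<iota>] by (simp only: of_nat_le_iff)
    then have "real (card (fib e v0 n N \<iota>)) / (fact N ^ card (torus_pts n :: (int^'d) set)) \<le> 1"
      using F0 by simp
    moreover have "wt w n N \<iota> > 0" by (rule wt_pos[OF wpos \<iota>])
    ultimately have "real (card (fib e v0 n N \<iota>)) / (fact N ^ card (torus_pts n :: (int^'d) set)) * wt w n N \<iota> \<le> 1 * wt w n N \<iota>"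
      by (intro mult_right_mono) auto
    then show "real (card (fib e v0 n N \<iota>)) / (fact N ^ card (torus_pts n :: (int^'d) set)) * wt w n N \<iota> \<le> wt w n N \<iota>"
      by simp
  qed
  also have "\<dots> = (\<Sum>j<D. w j) ^ (card (torus_pts n :: (int^'d) set) * N)"
    using sum_wt_exp[where s=0 and w=w and D=D and n=n and N=N and ll="\<lambda>_. 0"] by simp
  finally show ?thesis .
qed

lemma A_lower:
  fixes e :: "nat \<Rightarrow> real^'d"
  assumes n: "n \<ge> 1" and D: "D \<ge> 1" and wpos: "\<forall>i<D. w i > 0"
  shows "(\<Sum>j<D. w j) ^ (card (torus_pts n :: (int^'d) set) * N) / (real (N+1)) ^ (D * card (torus_pts n :: (int^'d) set))
     \<le> Aof D e v0 w n N"
proof -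
  let ?X = "torus_pts n :: (int^'d) set"
  let ?I = "IT D n N :: ((int^'d) \<Rightarrow> nat \<Rightarrow> nat) set"
  let ?c = "\<lambda>\<iota>. real (card (fib e v0 n N \<iota>))"
  let ?F = "fact N ^ card ?X :: real"
  have F0: "?F > 0" by simp
  obtain M where M: "M \<subseteq> ?I" "\<forall>\<iota>\<in>M. \<forall>y\<in>?X. card (Sy e v0 n N \<iota> y) = N"
    "(\<Sum>j<D. w j) ^ (card ?X * N) / (real (N+1)) ^ (D * card ?X) \<le> (\<Sum>\<iota>\<in>M. wt w n N \<iota>)"
    using mode_bound[OF n D wpos, of N e v0] by blast
  have "(\<Sum>\<iota>\<in>M. wt w n N \<iota>) = (\<Sum>\<iota>\<in>M. ?c \<iota> / ?F * wt w n N \<iota>)"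
  proof (rule sum.cong[OF refl])
    fix \<iota> assume "\<iota> \<in> M"
    then have "card (fib e v0 n N \<iota>) = fact N ^ card ?X" using card_fib[OF n] M(2) by blast
    then have "?c \<iota> = ?F" by simp
    then show "wt w n N \<iota> = ?c \<iota> / ?F * wt w n N \<iota>" using F0 by simp
  qed
  also have "\<dots> \<le> Aof D e v0 w n N"
    unfolding Aof_def
  proof (rule sum_mono2[OF finite_IT M(1)])
    fix \<iota> assume "\<iota> \<in> ?I - M"
    then have "wt w n N \<iota> > 0" using wt_pos[OF wpos] by blast
    then show "0 \<le> ?c \<iota> / ?F * wt w n N \<iota>" using F0 by simp
  qed
  finally show ?thesis using M(3) by linarith
qed

lemma phi_lin:
  fixes \<iota> :: "int^'d \<Rightarrow> nat \<Rightarrow> nat"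
  shows "phi (\<lambda>j. a * f j + b) n N \<iota> = a * phi f n N \<iota> + b * real (card (torus_pts n :: (int^'d) set) * N)"
  unfolding phi_def by (simp add: sum.distrib sum_distrib_left)

lemma card_torus_pos: "n \<ge> 1 \<Longrightarrow> card (torus_pts n :: (int^'d) set) \<ge> 1"
  unfolding card_torus by simp

lemma E_conc:
  fixes e :: "nat \<Rightarrow> real^'d" and w :: "nat \<Rightarrow> real"
  assumes n: "n \<ge> 1" and N: "N \<ge> 1" and D: "D \<ge> 1" and wpos: "\<forall>i<D. w i > 0"
    and eps: "\<epsilon> > 0" and \<rho>0: "\<rho> \<ge> 0"
  defines "W \<equiv> (\<Sum>i<D. w i)"
  defines "K \<equiv> (\<Sum>j<D. \<bar>ln (w j)\<bar>)"
  defines "m \<equiv> card (torus_pts n :: (int^'d) set) * N"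
  assumes Bp: "(\<Sum>\<iota>\<in>{\<iota>\<in>(IT D n N :: ((int^'d) \<Rightarrow> nat \<Rightarrow> nat) set).
         phi (\<lambda>j. 1 * ln (w j) + K) n N \<iota> \<ge> ((\<Sum>j<D. w j / W * (1 * ln (w j) + K)) + \<epsilon>) * real m}.
        wt w n N \<iota>) \<le> (W * \<rho>) ^ m"
    and Bm: "(\<Sum>\<iota>\<in>{\<iota>\<in>(IT D n N :: ((int^'d) \<Rightarrow> nat \<Rightarrow> nat) set).
         phi (\<lambda>j. (-1) * ln (w j) + K) n N \<iota> \<ge> ((\<Sum>j<D. w j / W * ((-1) * ln (w j) + K)) + \<epsilon>) * real m}.
        wt w n N \<iota>) \<le> (W * \<rho>) ^ m"
  shows "\<bar>Eof D e v0 w n N / Aof D e v0 w n N / real m - (\<Sum>j<D. w j * ln (w j)) / W\<bar>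
           \<le> \<epsilon> + 4 * K * \<rho> ^ m * real (N+1) ^ (D * card (torus_pts n :: (int^'d) set))"
proof -
  let ?X = "torus_pts n :: (int^'d) set"
  let ?I = "IT D n N :: ((int^'d) \<Rightarrow> nat \<Rightarrow> nat) set"
  let ?F = "fact N ^ card ?X :: real"
  define \<omega> where "\<omega> \<iota> = real (card (fib e v0 n N \<iota>)) / ?F * wt w n N \<iota>" for \<iota> :: "int^'d \<Rightarrow> nat \<Rightarrow> nat"
  define \<phi> where "\<phi> \<iota> = phi (\<lambda>j. ln (w j)) n N \<iota>" for \<iota> :: "int^'d \<Rightarrow> nat \<Rightarrow> nat"
  define \<mu> where "\<mu> = (\<Sum>j<D. w j * ln (w j)) / W"
  define A where "A = Aof D e v0 w n N"
  define E where "E = Eof D e v0 w n N"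
  have W0: "W > 0" unfolding W_def using D wpos by (intro sum_pos) (auto simp: lessThan_empty_iff)
  have m0: "m \<ge> 1" unfolding m_def using card_torus_pos[OF n] N by simp
  have A0: "A > 0" unfolding A_def using entropy_eq'[OF n D wpos, of e v0 N] by blast
  have Aeq: "A = (\<Sum>\<iota>\<in>?I. \<omega> \<iota>)" unfolding A_def Aof_def \<omega>_def ..
  have Eeq: "E = (\<Sum>\<iota>\<in>?I. \<omega> \<iota> * \<phi> \<iota>)" unfolding E_def Eof_def \<omega>_def \<phi>_def ..
  have F0: "?F > 0" by simp
  have \<omega>0: "0 \<le> \<omega> \<iota>" if "\<iota> \<in> ?I" for \<iota>
    unfolding \<omega>_def using wt_pos[OF wpos that] F0 by simp
  have \<omega>wt: "\<omega> \<iota> \<le> wt w n N \<iota>" if "\<iota> \<in> ?I" for \<iota>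
  proof -
    have "real (card (fib e v0 n N \<iota>)) \<le> real (fact N ^ card ?X)"
      using card_fib_le[OF n, of e v0 N \<iota>] by (simp only: of_nat_le_iff)
    then have "real (card (fib e v0 n N \<iota>)) / ?F \<le> 1" using F0 by simp
    then have "real (card (fib e v0 n N \<iota>)) / ?F * wt w n N \<iota> \<le> 1 * wt w n N \<iota>"
      using wt_pos[OF wpos that] by (intro mult_right_mono) auto
    then show ?thesis unfolding \<omega>_def by simp
  qed
  have lnK: "\<bar>ln (w j)\<bar> \<le> K" if "j < D" for j
    unfolding K_def using that by (intro member_le_sum) auto
  have K0: "K \<ge> 0" unfolding K_def by (intro sum_nonneg) auto
  have \<phi>K: "\<bar>\<phi> \<iota>\<bar> \<le> K * real m" if "\<iota> \<in> ?I" for \<iota>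
  proof -
    have v: "\<iota> x a < D" if "x \<in> ?X" "a < N" for x a
      using \<open>\<iota> \<in> ?I\<close> that unfolding IT_def by (auto simp: PiE_iff)
    have "\<bar>\<phi> \<iota>\<bar> \<le> (\<Sum>x\<in>?X. \<bar>\<Sum>a<N. ln (w (\<iota> x a))\<bar>)" unfolding \<phi>_def phi_def by (rule sum_abs)
    also have "\<dots> \<le> (\<Sum>x\<in>?X. \<Sum>a<N. \<bar>ln (w (\<iota> x a))\<bar>)" by (intro sum_mono sum_abs)
    also have "\<dots> \<le> (\<Sum>x\<in>?X. \<Sum>a<N. K)" using v lnK by (intro sum_mono) auto
    also have "\<dots> = K * real m" unfolding m_def by simp
    finally show ?thesis .
  qed
  have q1: "(\<Sum>j<D. w j / W) = 1" unfolding W_def using W0 unfolding W_def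
    by (simp add: sum_divide_distrib[symmetric])
  have \<mu>K: "\<bar>\<mu>\<bar> \<le> K"
  proof -
    have "\<bar>\<mu>\<bar> = \<bar>\<Sum>j<D. w j / W * ln (w j)\<bar>" unfolding \<mu>_def by (simp add: sum_divide_distrib)
    also have "\<dots> \<le> (\<Sum>j<D. \<bar>w j / W * ln (w j)\<bar>)" by (rule sum_abs)
    also have "\<dots> \<le> (\<Sum>j<D. w j / W * K)"
    proof (rule sum_mono)
      fix j assume j: "j \<in> {..<D}"
      then have "w j / W > 0" using wpos W0 by simp
      then have "\<bar>w j / W * ln (w j)\<bar> = w j / W * \<bar>ln (w j)\<bar>" by (simp only: abs_mult abs_of_pos)
      also have "\<dots> \<le> w j / W * K" using lnK[of j] j \<open>w j / W > 0\<close> by (intro mult_left_mono) auto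
      finally show "\<bar>w j / W * ln (w j)\<bar> \<le> w j / W * K" .
    qed
    also have "\<dots> = K" unfolding sum_distrib_right[symmetric] q1 by simp
    finally show ?thesis .
  qed
  have mu': "\<mu> = (\<Sum>j<D. w j / W * ln (w j))" unfolding \<mu>_def by (simp add: sum_divide_distrib)
  have mup: "(\<Sum>j<D. w j / W * (1 * ln (w j) + K)) = \<mu> + K"
  proof -
    have "(\<Sum>j<D. w j / W * (1 * ln (w j) + K)) = (\<Sum>j<D. w j / W * ln (w j)) + (\<Sum>j<D. w j / W) * K"
      by (simp only: mult_1 distrib_left sum.distrib sum_distrib_right)
    then show ?thesis unfolding q1 mu' by simp
  qed
  have mum: "(\<Sum>j<D. w j / W * ((-1) * ln (w j) + K)) = K - \<mu>"
  proof -
    have "(\<Sum>j<D. w j / W * ((-1) * ln (w j) + K)) = - (\<Sum>j<D. w j / W * ln (w j)) + (\<Sum>j<D. w j / W) * K"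
      by (simp only: mult_minus1 distrib_left sum.distrib sum_distrib_right mult_minus_right sum_negf)
    then show ?thesis unfolding q1 mu' by simp
  qed
  define f where "f \<iota> = \<phi> \<iota> / real m - \<mu>" for \<iota> :: "int^'d \<Rightarrow> nat \<Rightarrow> nat"
  have fK: "\<bar>f \<iota>\<bar> \<le> 2 * K" if "\<iota> \<in> ?I" for \<iota>
  proof -
    have "\<bar>\<phi> \<iota> / real m\<bar> \<le> K" using \<phi>K[OF that] m0 by (simp add: divide_le_eq)
    then show ?thesis unfolding f_def using \<mu>K by linarith
  qed
  define Bp where "Bp = {\<iota>\<in>?I. phi (\<lambda>j. 1 * ln (w j) + K) n N \<iota> \<ge> ((\<Sum>j<D. w j / W * (1 * ln (w j) + K)) + \<epsilon>) * real m}"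
  define Bm where "Bm = {\<iota>\<in>?I. phi (\<lambda>j. (-1) * ln (w j) + K) n N \<iota> \<ge> ((\<Sum>j<D. w j / W * ((-1) * ln (w j) + K)) + \<epsilon>) * real m}"
  define bad where "bad = {\<iota>\<in>?I. \<bar>f \<iota>\<bar> > \<epsilon>}"
  have badsub: "bad \<subseteq> Bp \<union> Bm"
  proof
    fix \<iota> assume "\<iota> \<in> bad"
    then have \<iota>: "\<iota> \<in> ?I" and fe: "\<bar>f \<iota>\<bar> > \<epsilon>" unfolding bad_def by auto
    have pp: "phi (\<lambda>j. 1 * ln (w j) + K) n N \<iota> = \<phi> \<iota> + K * real m"
      unfolding \<phi>_def m_def using phi_lin[of 1 "\<lambda>j. ln (w j)" K n N \<iota>] by simp
    have pm: "phi (\<lambda>j. (-1) * ln (w j) + K) n N \<iota> = - \<phi> \<iota> + K * real m"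
      unfolding \<phi>_def m_def using phi_lin[of "-1" "\<lambda>j. ln (w j)" K n N \<iota>] by simp
    have mpos: "real m > 0" using m0 by simp
    show "\<iota> \<in> Bp \<union> Bm"
    proof (cases "f \<iota> > \<epsilon>")
      case True
      then have "\<phi> \<iota> / real m > \<mu> + \<epsilon>" unfolding f_def by simp
      then have "\<phi> \<iota> > (\<mu> + \<epsilon>) * real m" using mpos by (simp add: pos_less_divide_eq)
      then have "phi (\<lambda>j. 1 * ln (w j) + K) n N \<iota> \<ge> ((\<mu> + K) + \<epsilon>) * real m"
        unfolding pp distrib_right by linarith
      then have "\<iota> \<in> Bp" unfolding Bp_def mup using \<iota> by blast
      then show ?thesis by blast
    next
      case False
      then have "f \<iota> < - \<epsilon>" using fe by linarith
      then have "\<phi> \<iota> / real m < \<mu> - \<epsilon>" unfolding f_def by simp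
      then have "\<phi> \<iota> < (\<mu> - \<epsilon>) * real m" using mpos by (simp add: pos_divide_less_eq)
      then have "phi (\<lambda>j. (-1) * ln (w j) + K) n N \<iota> \<ge> ((K - \<mu>) + \<epsilon>) * real m"
        unfolding pm distrib_right left_diff_distrib by linarith
      then have "\<iota> \<in> Bm" unfolding Bm_def mum using \<iota> by blast
      then show ?thesis by blast
    qed
  qed
  have finI: "finite ?I" by (rule finite_IT)
  have wt0: "wt w n N \<iota> \<ge> 0" if "\<iota> \<in> ?I" for \<iota> using wt_pos[OF wpos that] by simp
  have sbad: "(\<Sum>\<iota>\<in>bad. wt w n N \<iota>) \<le> 2 * (W * \<rho>) ^ m"
  proof -
    have "(\<Sum>\<iota>\<in>bad. wt w n N \<iota>) \<le> (\<Sum>\<iota>\<in>Bp \<union> Bm. wt w n N \<iota>)"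
      using badsub wt0 finI unfolding Bp_def Bm_def by (intro sum_mono2) (auto intro: finite_subset)
    also have "\<dots> \<le> (\<Sum>\<iota>\<in>Bp. wt w n N \<iota>) + (\<Sum>\<iota>\<in>Bm. wt w n N \<iota>)"
    proof -
      have fB: "finite Bp" "finite Bm" using finI unfolding Bp_def Bm_def by auto
      have "(\<Sum>\<iota>\<in>Bp \<union> Bm. wt w n N \<iota>) = (\<Sum>\<iota>\<in>Bp. wt w n N \<iota>) + (\<Sum>\<iota>\<in>Bm. wt w n N \<iota>) - (\<Sum>\<iota>\<in>Bp \<inter> Bm. wt w n N \<iota>)"
        using fB by (rule sum_Un)
      moreover have "(\<Sum>\<iota>\<in>Bp \<inter> Bm. wt w n N \<iota>) \<ge> 0" using wt0 unfolding Bp_def by (intro sum_nonneg) auto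
      ultimately show ?thesis by linarith
    qed
    also have "\<dots> \<le> (W * \<rho>) ^ m + (W * \<rho>) ^ m"
      using Bp Bm unfolding Bp_def Bm_def by (intro add_mono)
    finally show ?thesis by simp
  qed
  have diff: "E / A / real m - \<mu> = (\<Sum>\<iota>\<in>?I. \<omega> \<iota> * f \<iota>) / A"
  proof -
    have "(\<Sum>\<iota>\<in>?I. \<omega> \<iota> * f \<iota>) = (\<Sum>\<iota>\<in>?I. \<omega> \<iota> * \<phi> \<iota>) / real m - \<mu> * (\<Sum>\<iota>\<in>?I. \<omega> \<iota>)"
      unfolding f_def by (simp add: right_diff_distrib sum_subtractf sum_divide_distrib sum_distrib_left mult.commute)
    then have "(\<Sum>\<iota>\<in>?I. \<omega> \<iota> * f \<iota>) = E / real m - \<mu> * A" unfolding Eeq Aeq .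
    moreover have "E / A / real m - \<mu> = (E / real m - \<mu> * A) / A" using A0 by (simp add: field_simps)
    ultimately show ?thesis by simp
  qed
  have "\<bar>\<Sum>\<iota>\<in>?I. \<omega> \<iota> * f \<iota>\<bar> \<le> (\<Sum>\<iota>\<in>?I. \<epsilon> * \<omega> \<iota> + (if \<iota> \<in> bad then 2 * K * wt w n N \<iota> else 0))"
  proof -
    have "\<bar>\<Sum>\<iota>\<in>?I. \<omega> \<iota> * f \<iota>\<bar> \<le> (\<Sum>\<iota>\<in>?I. \<bar>\<omega> \<iota> * f \<iota>\<bar>)" by (rule sum_abs)
    also have "\<dots> \<le> (\<Sum>\<iota>\<in>?I. \<epsilon> * \<omega> \<iota> + (if \<iota> \<in> bad then 2 * K * wt w n N \<iota> else 0))"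
    proof (rule sum_mono)
      fix \<iota> assume \<iota>: "\<iota> \<in> ?I"
      have a: "\<bar>\<omega> \<iota> * f \<iota>\<bar> = \<omega> \<iota> * \<bar>f \<iota>\<bar>" using \<omega>0[OF \<iota>] by (simp add: abs_mult)
      show "\<bar>\<omega> \<iota> * f \<iota>\<bar> \<le> \<epsilon> * \<omega> \<iota> + (if \<iota> \<in> bad then 2 * K * wt w n N \<iota> else 0)"
      proof (cases "\<iota> \<in> bad")
        case True
        have "\<omega> \<iota> * \<bar>f \<iota>\<bar> \<le> \<omega> \<iota> * (2 * K)" using fK[OF \<iota>] \<omega>0[OF \<iota>] by (intro mult_left_mono)
        also have "\<dots> \<le> wt w n N \<iota> * (2 * K)" using \<omega>wt[OF \<iota>] K0 by (intro mult_right_mono) auto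
        finally have "\<omega> \<iota> * \<bar>f \<iota>\<bar> \<le> 2 * K * wt w n N \<iota>" by (simp add: mult.commute)
        moreover have "\<epsilon> * \<omega> \<iota> \<ge> 0" using eps \<omega>0[OF \<iota>] by simp
        ultimately show ?thesis using True a by simp
      next
        case False
        then have "\<bar>f \<iota>\<bar> \<le> \<epsilon>" using \<iota> unfolding bad_def by auto
        then have "\<omega> \<iota> * \<bar>f \<iota>\<bar> \<le> \<omega> \<iota> * \<epsilon>" using \<omega>0[OF \<iota>] by (intro mult_left_mono)
        then show ?thesis using False a by (simp add: mult.commute)
      qed
    qed
    finally show ?thesis .
  qed
  also have "\<dots> = \<epsilon> * A + 2 * K * (\<Sum>\<iota>\<in>bad. wt w n N \<iota>)"
  proof -
    have "(\<Sum>\<iota>\<in>?I. (if \<iota> \<in> bad then 2 * K * wt w n N \<iota> else 0)) = (\<Sum>\<iota>\<in>bad. 2 * K * wt w n N \<iota>)"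
      using finI unfolding bad_def by (simp add: sum.If_cases Int_def)
    then show ?thesis unfolding sum.distrib Aeq sum_distrib_left by simp
  qed
  also have "\<dots> \<le> \<epsilon> * A + 2 * K * (2 * (W * \<rho>) ^ m)"
    using sbad K0 by (intro add_left_mono mult_left_mono) auto
  finally have num: "\<bar>\<Sum>\<iota>\<in>?I. \<omega> \<iota> * f \<iota>\<bar> \<le> \<epsilon> * A + 4 * K * (W * \<rho>) ^ m" by simp
  have Alow: "W ^ m / real (N+1) ^ (D * card ?X) \<le> A"
    unfolding A_def m_def W_def by (rule A_lower[OF n D wpos])
  have "\<bar>E / A / real m - \<mu>\<bar> \<le> (\<epsilon> * A + 4 * K * (W * \<rho>) ^ m) / A"
    unfolding diff using num A0 by (simp add: divide_right_mono)
  also have "\<dots> = \<epsilon> + 4 * K * (W * \<rho>) ^ m / A" using A0 by (simp add: field_simps)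
  also have "4 * K * (W * \<rho>) ^ m / A \<le> 4 * K * (W * \<rho>) ^ m / (W ^ m / real (N+1) ^ (D * card ?X))"
  proof (rule divide_left_mono[OF Alow])
    show "0 \<le> 4 * K * (W * \<rho>) ^ m" using K0 \<rho>0 W0 by simp
    have "W ^ m / real (N+1) ^ (D * card ?X) > 0" using W0 by simp
    then show "0 < A * (W ^ m / real (N+1) ^ (D * card ?X))" using A0 by (rule mult_pos_pos[rotated])
  qed
  also have "4 * K * (W * \<rho>) ^ m / (W ^ m / real (N+1) ^ (D * card ?X)) = 4 * K * \<rho> ^ m * real (N+1) ^ (D * card ?X)"
    using W0 by (simp add: power_mult_distrib field_simps)
  finally show ?thesis unfolding E_def A_def \<mu>_def by simp
qed

lemma geom_poly_lim: "0 < (r::real) \<Longrightarrow> r < 1 \<Longrightarrow> (\<lambda>N::nat. r ^ N * real (N+1) ^ D) \<longlonglongrightarrow> 0"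
  by real_asymp

lemma log_lim: "(\<lambda>N::nat. real D * ln (real (N+1)) / real N) \<longlonglongrightarrow> 0"
  by real_asymp

lemma g1_lim:
  fixes e :: "nat \<Rightarrow> real^'d"
  assumes n: "n \<ge> 1" and D: "D \<ge> 1" and wpos: "\<forall>i<D. w i > 0"
  shows "((\<lambda>N. ln (Aof D e v0 w n N) / real (card (torus_pts n :: (int^'d) set) * N)) \<longlongrightarrow> ln (\<Sum>i<D. w i)) sequentially"
proof -
  let ?c = "card (torus_pts n :: (int^'d) set)"
  let ?W = "\<Sum>i<D. w i"
  have c1: "?c \<ge> 1" by (rule card_torus_pos[OF n])
  have W0: "?W > 0" using D wpos by (intro sum_pos) (auto simp: lessThan_empty_iff)
  have up: "ln (Aof D e v0 w n N) / real (?c * N) \<le> ln ?W" if N: "N \<ge> 1" for N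
  proof -
    have A0: "Aof D e v0 w n N > 0" using entropy_eq'[OF n D wpos, of e v0 N] by blast
    have "ln (Aof D e v0 w n N) \<le> ln (?W ^ (?c * N))" using A_upper[OF n wpos, of e v0 N] A0 by simp
    also have "\<dots> = real (?c * N) * ln ?W" using W0 by (simp add: ln_realpow)
    finally show ?thesis using c1 N by (simp add: divide_le_eq mult.commute)
  qed
  have lo: "ln ?W - real D * ln (real (N+1)) / real N \<le> ln (Aof D e v0 w n N) / real (?c * N)" if N: "N \<ge> 1" for N
  proof -
    have A0: "Aof D e v0 w n N > 0" using entropy_eq'[OF n D wpos, of e v0 N] by blast
    have pos: "?W ^ (?c * N) / real (N+1) ^ (D * ?c) > 0" using W0 by simp
    have "ln (?W ^ (?c * N) / real (N+1) ^ (D * ?c)) \<le> ln (Aof D e v0 w n N)"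
      using A_lower[OF n D wpos, of N e v0] pos by simp
    moreover have "ln (?W ^ (?c * N) / real (N+1) ^ (D * ?c)) = real (?c * N) * ln ?W - real (D * ?c) * ln (real (N+1))"
      using W0 by (simp add: ln_div ln_realpow)
    ultimately have "real (?c * N) * ln ?W - real (D * ?c) * ln (real (N+1)) \<le> ln (Aof D e v0 w n N)" by simp
    moreover have "(real (?c * N) * ln ?W - real (D * ?c) * ln (real (N+1))) / real (?c * N)
       = ln ?W - real D * ln (real (N+1)) / real N"
      using c1 N by (simp add: field_simps)
    moreover have "real (?c * N) > 0" using c1 N by simp
    ultimately show ?thesis by (metis divide_right_mono less_imp_le)
  qed
  have "((\<lambda>N. ln ?W - real D * ln (real (N+1)) / real N) \<longlongrightarrow> ln ?W - 0) sequentially"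
    by (intro tendsto_diff tendsto_const log_lim)
  then have L: "((\<lambda>N. ln ?W - real D * ln (real (N+1)) / real N) \<longlongrightarrow> ln ?W) sequentially" by simp
  show ?thesis
  proof (rule tendsto_sandwich[OF _ _ L tendsto_const])
    show "\<forall>\<^sub>F N in sequentially. ln ?W - real D * ln (real (N+1)) / real N \<le> ln (Aof D e v0 w n N) / real (?c * N)"
      using lo by (intro eventually_sequentiallyI[of 1]) auto
    show "\<forall>\<^sub>F N in sequentially. ln (Aof D e v0 w n N) / real (?c * N) \<le> ln ?W"
      using up by (intro eventually_sequentiallyI[of 1]) auto
  qed
qed

lemma g2_lim:
  fixes e :: "nat \<Rightarrow> real^'d"
  assumes n: "n \<ge> 1" and D: "D \<ge> 1" and wpos: "\<forall>i<D. w i > 0"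
  shows "((\<lambda>N. Eof D e v0 w n N / Aof D e v0 w n N / real (card (torus_pts n :: (int^'d) set) * N))
     \<longlongrightarrow> (\<Sum>j<D. w j * ln (w j)) / (\<Sum>i<D. w i)) sequentially"
  unfolding tendsto_iff
proof (intro allI impI)
  fix r :: real assume r: "r > 0"
  let ?c = "card (torus_pts n :: (int^'d) set)"
  let ?W = "\<Sum>i<D. w i"
  let ?K = "\<Sum>j<D. \<bar>ln (w j)\<bar>"
  let ?\<mu> = "(\<Sum>j<D. w j * ln (w j)) / ?W"
  define \<epsilon> where "\<epsilon> = r / 2"
  have eps: "\<epsilon> > 0" unfolding \<epsilon>_def using r by simp
  have c1: "?c \<ge> 1" by (rule card_torus_pos[OF n])
  have W0: "?W > 0" using D wpos by (intro sum_pos) (auto simp: lessThan_empty_iff)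
  have lnK: "\<bar>ln (w j)\<bar> \<le> ?K" if "j < D" for j
    using that by (intro member_le_sum) auto
  have lnK2: "- ?K \<le> ln (w j) \<and> ln (w j) \<le> ?K" if "j < D" for j
    using abs_le_D1[OF lnK[OF that]] abs_le_D2[OF lnK[OF that]] by linarith
  have l0p: "\<forall>j<D. 0 \<le> 1 * ln (w j) + ?K"
  proof (intro allI impI)
    fix j assume "j < D" then show "0 \<le> 1 * ln (w j) + ?K" using lnK2[of j] by linarith
  qed
  have l0m: "\<forall>j<D. 0 \<le> (-1) * ln (w j) + ?K"
  proof (intro allI impI)
    fix j assume "j < D" then show "0 \<le> (-1) * ln (w j) + ?K" using lnK2[of j] by linarith
  qed
  obtain \<rho>p where \<rho>p: "0 < \<rho>p" "\<rho>p < 1" and Cp: "\<forall>n N.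
     (\<Sum>\<iota>\<in>{\<iota>\<in>(IT D n N :: ((int^'d) \<Rightarrow> nat \<Rightarrow> nat) set).
         phi (\<lambda>j. 1 * ln (w j) + ?K) n N \<iota> \<ge> ((\<Sum>j<D. w j / ?W * (1 * ln (w j) + ?K)) + \<epsilon>) * real (card (torus_pts n :: (int^'d) set) * N)}.
        wt w n N \<iota>) \<le> (?W * \<rho>p) ^ (card (torus_pts n :: (int^'d) set) * N)"
    using chernoff[where ll="\<lambda>j. 1 * ln (w j) + ?K", OF D wpos l0p eps] by blast
  obtain \<rho>m where \<rho>m: "0 < \<rho>m" "\<rho>m < 1" and Cm: "\<forall>n N.
     (\<Sum>\<iota>\<in>{\<iota>\<in>(IT D n N :: ((int^'d) \<Rightarrow> nat \<Rightarrow> nat) set).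
         phi (\<lambda>j. (-1) * ln (w j) + ?K) n N \<iota> \<ge> ((\<Sum>j<D. w j / ?W * ((-1) * ln (w j) + ?K)) + \<epsilon>) * real (card (torus_pts n :: (int^'d) set) * N)}.
        wt w n N \<iota>) \<le> (?W * \<rho>m) ^ (card (torus_pts n :: (int^'d) set) * N)"
    using chernoff[where ll="\<lambda>j. (-1) * ln (w j) + ?K", OF D wpos l0m eps] by blast
  define \<rho> where "\<rho> = max \<rho>p \<rho>m"
  have \<rho>0: "\<rho> > 0" "\<rho> < 1" unfolding \<rho>_def using \<rho>p \<rho>m by auto
  have pw: "(?W * \<rho>') ^ m \<le> (?W * \<rho>) ^ m" if "0 < \<rho>'" "\<rho>' \<le> \<rho>" for \<rho>' m
    using that W0 by (intro power_mono mult_left_mono) auto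
  have bound: "\<bar>Eof D e v0 w n N / Aof D e v0 w n N / real (?c * N) - ?\<mu>\<bar>
           \<le> \<epsilon> + 4 * ?K * (\<rho> ^ N * real (N+1) ^ D) ^ ?c" if N: "N \<ge> 1" for N
  proof -
    have Bp: "(\<Sum>\<iota>\<in>{\<iota>\<in>(IT D n N :: ((int^'d) \<Rightarrow> nat \<Rightarrow> nat) set).
         phi (\<lambda>j. 1 * ln (w j) + ?K) n N \<iota> \<ge> ((\<Sum>j<D. w j / ?W * (1 * ln (w j) + ?K)) + \<epsilon>) * real (?c * N)}.
        wt w n N \<iota>) \<le> (?W * \<rho>) ^ (?c * N)"
      using Cp pw[of \<rho>p] \<rho>p unfolding \<rho>_def by (meson max.cobounded1 order_trans)
    have Bm: "(\<Sum>\<iota>\<in>{\<iota>\<in>(IT D n N :: ((int^'d) \<Rightarrow> nat \<Rightarrow> nat) set).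
         phi (\<lambda>j. (-1) * ln (w j) + ?K) n N \<iota> \<ge> ((\<Sum>j<D. w j / ?W * ((-1) * ln (w j) + ?K)) + \<epsilon>) * real (?c * N)}.
        wt w n N \<iota>) \<le> (?W * \<rho>) ^ (?c * N)"
      using Cm pw[of \<rho>m] \<rho>m unfolding \<rho>_def by (meson max.cobounded2 order_trans)
    have "\<bar>Eof D e v0 w n N / Aof D e v0 w n N / real (?c * N) - ?\<mu>\<bar>
           \<le> \<epsilon> + 4 * ?K * \<rho> ^ (?c * N) * real (N+1) ^ (D * ?c)"
      by (rule E_conc[OF n N D wpos eps less_imp_le[OF \<rho>0(1)] Bp Bm])
    also have "4 * ?K * \<rho> ^ (?c * N) * real (N+1) ^ (D * ?c) = 4 * ?K * (\<rho> ^ N * real (N+1) ^ D) ^ ?c"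
      by (simp add: power_mult power_mult_distrib mult.commute)
    finally show ?thesis .
  qed
  have "((\<lambda>N. 4 * ?K * (\<rho> ^ N * real (N+1) ^ D) ^ ?c) \<longlongrightarrow> 4 * ?K * 0 ^ ?c) sequentially"
    by (intro tendsto_mult tendsto_const tendsto_power geom_poly_lim \<rho>0)
  then have "((\<lambda>N. 4 * ?K * (\<rho> ^ N * real (N+1) ^ D) ^ ?c) \<longlongrightarrow> 0) sequentially" using c1 by (simp add: power_0_left)
  then have ev: "\<forall>\<^sub>F N in sequentially. 4 * ?K * (\<rho> ^ N * real (N+1) ^ D) ^ ?c < \<epsilon>"
    using eps by (rule order_tendstoD(2))
  show "\<forall>\<^sub>F N in sequentially. dist (Eof D e v0 w n N / Aof D e v0 w n N / real (?c * N)) ?\<mu> < r"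
    using ev eventually_ge_at_top[of 1]
  proof eventually_elim
    case (elim N)
    then have "\<bar>Eof D e v0 w n N / Aof D e v0 w n N / real (?c * N) - ?\<mu>\<bar> < \<epsilon> + \<epsilon>"
      using bound[of N] by linarith
    then show ?case unfolding dist_real_def \<epsilon>_def by simp
  qed
qed

theorem mainTheorem2:
  fixes D :: nat and e :: "nat \<Rightarrow> real^'d" and v0 :: "real^'d" and w :: "nat \<Rightarrow> real"
  assumes span_e: "span (e ` {..<D}) = UNIV"
    and sum_e: "(\<Sum>i<D. e i) = 0"
    and e_v0: "\<forall>i<D. int_point (e i - v0)"
    and e_inj: "inj_on e {..<D}"
    and conn: "Lambda_connected D e v0"
    and w_pos: "\<forall>i<D. w i > 0"
  shows "\<exists>L :: nat \<Rightarrow> real.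
           (\<forall>\<^sub>F n in sequentially.
              ((\<lambda>N. (boltzmann_entropy D e v0 w n N - real (n ^ CARD('d)) * ln (fact N))
                      / (real N * real (n ^ CARD('d)))) \<longlongrightarrow> L n) sequentially) \<and>
           (L \<longlonglongrightarrow> ln (\<Sum>i<D. w i) - (\<Sum>i<D. w i * ln (w i)) / (\<Sum>i<D. w i))"
proof -
  have D: "D \<ge> 1"
  proof (rule ccontr)
    assume "\<not> D \<ge> 1"
    then have "D = 0" by simp
    then have "span (e ` {..<D}) = {0}" by simp
    with span_e have U: "(UNIV :: (real^'d) set) = {0}" by simp
    have "(1::real^'d) \<in> UNIV" by simp
    then have "(1::real^'d) = 0" using U by blast
    then show False by simp
  qed
  let ?T = "ln (\<Sum>i<D. w i) - (\<Sum>i<D. w i * ln (w i)) / (\<Sum>i<D. w i)"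
  have lim: "((\<lambda>N. (boltzmann_entropy D e v0 w n N - real (n ^ CARD('d)) * ln (fact N))
                      / (real N * real (n ^ CARD('d)))) \<longlongrightarrow> ?T) sequentially" if n: "n \<ge> 1" for n
  proof -
    let ?c = "card (torus_pts n :: (int^'d) set)"
    have c: "?c = n ^ CARD('d)" by (rule card_torus)
    have "((\<lambda>N. ln (Aof D e v0 w n N) / real (?c * N) - Eof D e v0 w n N / Aof D e v0 w n N / real (?c * N))
          \<longlongrightarrow> ?T) sequentially"
      by (intro tendsto_diff g1_lim g2_lim n D w_pos)
    moreover have "\<forall>\<^sub>F N in sequentially.
        ln (Aof D e v0 w n N) / real (?c * N) - Eof D e v0 w n N / Aof D e v0 w n N / real (?c * N) =
        (boltzmann_entropy D e v0 w n N - real (n ^ CARD('d)) * ln (fact N)) / (real N * real (n ^ CARD('d)))"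
    proof (rule eventually_sequentiallyI[of 1])
      fix N :: nat assume N: "N \<ge> 1"
      have "boltzmann_entropy D e v0 w n N - real ?c * ln (fact N) = ln (Aof D e v0 w n N) - Eof D e v0 w n N / Aof D e v0 w n N"
        using entropy_eq'[OF n D w_pos, of e v0 N] by blast
      then show "ln (Aof D e v0 w n N) / real (?c * N) - Eof D e v0 w n N / Aof D e v0 w n N / real (?c * N) =
        (boltzmann_entropy D e v0 w n N - real (n ^ CARD('d)) * ln (fact N)) / (real N * real (n ^ CARD('d)))"
        unfolding c by (simp add: diff_divide_distrib mult.commute)
    qed
    ultimately show ?thesis by (rule Lim_transform_eventually)
  qed
  show ?thesis
  proof (intro exI[of _ "\<lambda>_. ?T"] conjI tendsto_const)
    show "\<forall>\<^sub>F n in sequentially. ((\<lambda>N. (boltzmann_entropy D e v0 w n N - real (n ^ CARD('d)) * ln (fact N))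
                      / (real N * real (n ^ CARD('d)))) \<longlongrightarrow> ?T) sequentially"
      using lim by (intro eventually_sequentiallyI[of 1])
  qed
qed

end
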